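(* Let $\mathcal Z\subseteq\mathbb R^d$ be compact and convex, $\ell:\mathcal Z\to\mathbb R$ upper semicontinuous, $\phi$ an entropy function, $r\ge0$, $\epsilon\in(0,1)$, and $\hat\mu=\frac1n\sum_{i=1}^n\delta_{\hat z_i}$ with $\hat z_i\in\mathcal Z$. Let $\hat z_{n+1}\in\arg\max_{z\in\mathcal Z}\ell(z)$ with $\hat z_{n+1}\notin\{\hat z_1,\dots,\hat z_n\}$. Take $\mathcal V=\mathcal Z$, $\mathcal W=\mathbb R_+$, $\mathcal G$ the trivial $\sigma$-algebra, $f(v,w)=\ell(v)\,w$, $$\hat\nu=\frac{1-\epsilon}{n}\sum_{i=1}^n\delta_{(\hat z_i,\frac{1}{1-\epsilon})}+\epsilon\,\delta_{(\hat z_{n+1},0)},$$ and the cost $c((v,w),(\hat v,\hat w))=\infty\cdot\mathbb 1_{v\neq\hat v}+g(v)\,\phi\big(w/g(v)\big)$, where $g(v)=\frac1{1-\epsilon}$ if $v\in\{\hat z_1,\dots,\hat z_n\}$, $g(\hat z_{n+1})=0$, and $g(v)=+\infty$ otherwise; explicitly, $c((v,w),(\hat v,\hat w))=\frac1{1-\epsilon}\phi((1-\epsilon)w)$ if $v=\hat v\in\{\hat z_1,\dots,\hat z_n\}$, $=\phi'_\infty\cdot w$ if $v=\hat v=\hat z_{n+1}$, and $=+\infty$ otherwise. Then the OT-DRO problem with conditional moment constraints $\sup\{\mathbb E_\nu[f(V,W)]:\nu\in\mathcal P(\mathcal V\times\mathcal W),\ \mathbb M(\nu,\hat\nu)\le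 r\}$ has the same optimal value as the generalized $\phi$-divergence DRO problem $\sup_{\mu\in\mathcal P(\mathcal Z)}\{\mathbb E_\mu[\ell(Z)]:\mathbb D_\phi(\mu,\hat\mu)\le r\}$.
   Context: An entropy function is a lower semicontinuous convex $\phi:\mathbb R\to\mathbb R\cup\{+\infty\}$ with $\phi(1)=0$, $\mathrm{dom}(\phi)\subseteq\mathbb R_+$, $\mathrm{dom}(\phi)\cap\mathbb R_+\ne\emptyset$; $\phi'_\infty=\lim_{t\to\infty}\phi(t)/t$. Generalized $\phi$-divergence: for any measure $\rho$ dominating $\mu$ and $\hat\mu$, $\mathbb D_\phi(\mu,\hat\mu)=\int\frac{d\hat\mu}{d\rho}\,\phi\big(\frac{d\mu}{d\rho}/\frac{d\hat\mu}{d\rho}\big)d\rho$, with conventions $\phi(0)=\lim_{t\to0^+}\phi(t)$, $0\cdot\phi(0/0)=0$, $0\cdot\phi(\alpha/0)=\alpha\phi'_\infty$ ($\alpha>0$). Extended arithmetic: $\infty\cdot0=0\cdot\infty=0/0=0$, $\infty-\infty=1/0=\infty$. OT discrepancy with conditional moment constraints: let $\mathcal V\subseteq\mathbb R^{d_v}$ and $\mathcal W\subseteq\mathbb R_+$ be closed convex sets, let $(V,W,\hat V,\hat W)$ denote the coordinate random variables on $(\mathcal V\times\mathcal W)\times(\mathcal V\times\mathcal W)$, let $\mathcal G$ be a sub-$\sigma$-algebra (here trivial), and let $c$ be a lower semicontinuous cost on $(\mathcal V\times\mathcal W)^2$ with values in $\mathbb R\cup\{+\infty\}$. For $\nu,\hat\nu\in\mathcal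 P(\mathcal V\times\mathcal W)$, $\mathbb M(\nu,\hat\nu)=\inf\{\mathbb E_\pi[c((V,W),(\hat V,\hat W))]:\ \pi\in\mathcal P((\mathcal V\times\mathcal W)^2),\ \pi_{(V,W)}=\nu,\ \pi_{(\hat V,\hat W)}=\hat\nu,\ \mathbb E_\pi[W\mid\mathcal G]=1\ \pi\text{-a.s.}\}$, where $\pi_{(V,W)},\pi_{(\hat V,\hat W)}$ are the marginals of $\pi$. When $\mathcal G$ is trivial the constraint reads $\mathbb E_\pi[W]=1$. *)

theory Defs
  imports "HOL-Analysis.Analysis" "HOL-Probability.Probability"
begin

definition lsc_ereal :: "(real \<Rightarrow> ereal) \<Rightarrow> bool" where
  "lsc_ereal f \<longleftrightarrow> (\<forall>x. f x \<le> Liminf (at x) f)"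

definition convex_ereal :: "(real \<Rightarrow> ereal) \<Rightarrow> bool" where
  "convex_ereal f \<longleftrightarrow>
     (\<forall>x y t. 0 \<le> t \<and> t \<le> 1 \<longrightarrow>
        f ((1 - t) * x + t * y) \<le> ereal (1 - t) * f x + ereal t * f y)"

definition edom :: "(real \<Rightarrow> ereal) \<Rightarrow> real set" where
  "edom f = {t. f t < \<infinity>}"

definition entropy_function :: "(real \<Rightarrow> ereal) \<Rightarrow> bool" where
  "entropy_function \<phi> \<longleftrightarrow>
     (\<forall>t. \<phi> t \<noteq> -\<infinity>) \<and> lsc_ereal \<phi> \<and> convex_ereal \<phi> \<and> \<phi> 1 = 0 \<and>
     edom \<phi> \<subseteq> {0..} \<and> edom \<phi> \<inter> {0..} \<noteq> {}"

definition phi_inf :: "(real \<Rightarrow> ereal) \<Rightarrow> ereal" where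
  "phi_inf \<phi> = Lim at_top (\<lambda>t. \<phi> t / ereal t)"

definition phi_conv :: "(real \<Rightarrow> ereal) \<Rightarrow> real \<Rightarrow> ereal" where
  "phi_conv \<phi> t = (if t = 0 then Lim (at_right 0) \<phi> else \<phi> t)"

text \<open>Integral of an extended-real function as (positive part) - (negative part),
  with the convention oo - oo = oo (which is the ereal convention in Isabelle).\<close>
definition ext_int :: "'a measure \<Rightarrow> ('a \<Rightarrow> ereal) \<Rightarrow> ereal" where
  "ext_int M f = enn2ereal (\<integral>\<^sup>+ x. e2ennreal (f x) \<partial>M)
                 - enn2ereal (\<integral>\<^sup>+ x. e2ennreal (- f x) \<partial>M)"

definition sum_meas :: "'a measure \<Rightarrow> 'a measure \<Rightarrow> 'a measure" where
  "sum_meas M N = measure_of (space M) (sets M) (\<lambda>A. emeasure M A + emeasure N A)"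

text \<open>Integrand (dmu/drho) / (dmuhat/drho) with the conventions 0 phi(0/0) = 0 and
  0 phi(a/0) = a phi'_infty.\<close>
definition div_integrand :: "(real \<Rightarrow> ereal) \<Rightarrow> ennreal \<Rightarrow> ennreal \<Rightarrow> ereal" where
  "div_integrand \<phi> p q =
     (if q = 0 then (if p = 0 then 0 else enn2ereal p * phi_inf \<phi>)
      else enn2ereal q * phi_conv \<phi> (enn2real p / enn2real q))"

definition phi_div :: "(real \<Rightarrow> ereal) \<Rightarrow> 'a measure \<Rightarrow> 'a measure \<Rightarrow> ereal" where
  "phi_div \<phi> \<mu> \<mu>h =
     (let \<rho> = sum_meas \<mu> \<mu>h in
      ext_int \<rho> (\<lambda>x. div_integrand \<phi> (RN_deriv \<rho> \<mu> x) (RN_deriv \<rho> \<mu>h x)))"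

definition OT_disc ::
  "(('a::euclidean_space \<times> real) \<Rightarrow> ('a \<times> real) \<Rightarrow> ereal) \<Rightarrow>
   ('a \<times> real) measure \<Rightarrow> ('a \<times> real) measure \<Rightarrow> ereal" where
  "OT_disc c \<nu> \<nu>h =
     (INF \<pi> \<in> {\<pi> :: (('a \<times> real) \<times> ('a \<times> real)) measure.
                  prob_space \<pi> \<and> sets \<pi> = sets borel \<and>
                  distr \<pi> borel fst = \<nu> \<and> distr \<pi> borel snd = \<nu>h \<and>
                  (\<integral>\<^sup>+ x. ennreal (snd (fst x)) \<partial>\<pi>) = 1}.
        ext_int \<pi> (\<lambda>x. c (fst x) (snd x)))"

definition usc_on :: "'a::topological_space set \<Rightarrow> ('a \<Rightarrow> real) \<Rightarrow> bool" where
  "usc_on Z f \<longleftrightarrow> (\<forall>z\<in>Z. \<forall>a. f z < a \<longrightarrow> (\<forall>\<^sub>F y in at z within Z. f y < a))"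

definition empirical :: "nat \<Rightarrow> (nat \<Rightarrow> 'a::topological_space) \<Rightarrow> 'a measure" where
  "empirical n zh = distr (measure_pmf (pmf_of_set {1..n})) borel zh"

text \<open>nuhat = (1-eps)/n sum delta_{(zh i, 1/(1-eps))} + eps delta_{(zh (n+1), 0)}.\<close>
definition nu_hat :: "nat \<Rightarrow> (nat \<Rightarrow> 'a::topological_space) \<Rightarrow> real \<Rightarrow> ('a \<times> real) measure" where
  "nu_hat n zh \<epsilon> = distr (measure_pmf
      (bind_pmf (bernoulli_pmf \<epsilon>)
        (\<lambda>b. if b then return_pmf (zh (Suc n), 0)
             else map_pmf (\<lambda>i. (zh i, 1 / (1 - \<epsilon>))) (pmf_of_set {1..n})))) borel (\<lambda>x. x)"

definition cost_ot :: "(real \<Rightarrow> ereal) \<Rightarrow> nat \<Rightarrow> (nat \<Rightarrow> 'a) \<Rightarrow> real \<Rightarrow>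
    ('a \<times> real) \<Rightarrow> ('a \<times> real) \<Rightarrow> ereal" where
  "cost_ot \<phi> n zh \<epsilon> vw vwh =
     (let v = fst vw; w = snd vw; vh = fst vwh in
      if v = vh \<and> v \<in> zh ` {1..n} then phi_conv \<phi> ((1 - \<epsilon>) * w) / ereal (1 - \<epsilon>)
      else if v = vh \<and> v = zh (Suc n) then phi_inf \<phi> * ereal w
      else \<infinity>)"

end

theory Submission
  imports Defs
begin

context
  fixes \<phi> :: "real \<Rightarrow> ereal"
  assumes ef: "entropy_function \<phi>"
begin

lemma ef_not_minf: "\<phi> t \<noteq> -\<infinity>"
  using ef unfolding entropy_function_def by auto

lemma ef_one: "\<phi> 1 = 0"
  using ef unfolding entropy_function_def by auto

lemma ef_conv: "0 \<le> l \<Longrightarrow> l \<le> 1 \<Longrightarrow> \<phi> ((1 - l) * x + l * y) \<le> ereal (1 - l) * \<phi> x + ereal l * \<phi> y"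
  using ef unfolding entropy_function_def convex_ereal_def by auto

lemma ef_dom_nonneg: "\<phi> t < \<infinity> \<Longrightarrow> 0 \<le> t"
  using ef unfolding entropy_function_def edom_def by auto

lemma ef_neg: "t < 0 \<Longrightarrow> \<phi> t = \<infinity>"
  using ef_dom_nonneg[of t] by (cases "\<phi> t") auto

lemma ef_real: "\<phi> t < \<infinity> \<Longrightarrow> \<phi> t = ereal (real_of_ereal (\<phi> t))"
  using ef_not_minf[of t] by (cases "\<phi> t") auto

definition "\<psi> t = real_of_ereal (\<phi> t)"

lemma ef_conv_real:
  assumes "\<phi> x < \<infinity>" "\<phi> y < \<infinity>" "0 \<le> l" "l \<le> 1"
  shows "\<phi> ((1 - l) * x + l * y) < \<infinity>"
    "\<psi> ((1 - l) * x + l * y) \<le> (1 - l) * \<psi> x + l * \<psi> y"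
proof -
  have e: "ereal (1 - l) * \<phi> x + ereal l * \<phi> y = ereal ((1 - l) * \<psi> x + l * \<psi> y)"
    using ef_real[OF assms(1)] ef_real[OF assms(2)] unfolding \<psi>_def
    by (metis plus_ereal.simps(1) times_ereal.simps(1))
  have le: "\<phi> ((1 - l) * x + l * y) \<le> ereal ((1 - l) * \<psi> x + l * \<psi> y)"
    using ef_conv[OF assms(3,4), of x y] e by simp
  then show "\<phi> ((1 - l) * x + l * y) < \<infinity>" by (cases "\<phi> ((1 - l) * x + l * y)") auto
  then show "\<psi> ((1 - l) * x + l * y) \<le> (1 - l) * \<psi> x + l * \<psi> y"
    using le ef_real unfolding \<psi>_def by (metis ereal_less_eq(3))
qed

lemma ef_dom_between:
  assumes "\<phi> x < \<infinity>" "\<phi> y < \<infinity>" "x \<le> t" "t \<le> y"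
  shows "\<phi> t < \<infinity>"
proof (cases "x = y")
  case True then show ?thesis using assms by auto
next
  case False
  then have xy: "x < y" using assms by auto
  define l where "l = (t - x) / (y - x)"
  have h: "l * (y - x) = t - x" unfolding l_def using xy by simp
  have "t = (1 - l) * x + l * y" using h by (simp add: algebra_simps)
  moreover have "0 \<le> l" "l \<le> 1" unfolding l_def using xy assms by auto
  ultimately show ?thesis using ef_conv_real(1)[OF assms(1,2)] by auto
qed

lemma three_slope:
  assumes "\<phi> x < \<infinity>" "\<phi> y < \<infinity>" "x < m" "m < y"
  shows "(\<psi> m - \<psi> x) / (m - x) \<le> (\<psi> y - \<psi> m) / (y - m)"
proof -
  define l where "l = (m - x) / (y - x)"
  have h: "l * (y - x) = m - x" unfolding l_def using assms by simp
  have m: "m = (1 - l) * x + l * y" using h by (simp add: algebra_simps)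
  have "0 \<le> l" "l \<le> 1" unfolding l_def using assms by auto
  then have c: "\<psi> m \<le> (1 - l) * \<psi> x + l * \<psi> y" using ef_conv_real(2)[OF assms(1,2)] m by auto
  have "(\<psi> m - \<psi> x) * (y - m) \<le> (\<psi> y - \<psi> m) * (m - x)"
  proof -
    have "(y - x) * \<psi> m \<le> (y - x) * ((1 - l) * \<psi> x + l * \<psi> y)"
      using c assms by (intro mult_left_mono) auto
    also have "\<dots> = ((y - x) * (1 - l)) * \<psi> x + ((y - x) * l) * \<psi> y"
      by (simp add: algebra_simps)
    also have "(y - x) * l = m - x" using h by (simp add: algebra_simps)
    also have "(y - x) * (1 - l) = y - m" using h by (simp add: algebra_simps)
    finally have "(y - x) * \<psi> m \<le> (y - m) * \<psi> x + (m - x) * \<psi> y" .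
    then show ?thesis by (simp add: algebra_simps)
  qed
  then show ?thesis using assms by (simp add: field_simps)
qed

lemma subgrad:
  assumes "\<phi> x < \<infinity>" "\<phi> y < \<infinity>" "x < m" "m < y"
  shows "\<phi> m < \<infinity>" "\<exists>s. \<forall>t. ereal (\<psi> m + s * (t - m)) \<le> \<phi> t"
proof -
  show mD: "\<phi> m < \<infinity>" using ef_dom_between[OF assms(1,2)] assms by auto
  define T where "T = {(\<psi> m - \<psi> t) / (m - t) | t. \<phi> t < \<infinity> \<and> t < m}"
  define s where "s = Sup T"
  have ne: "T \<noteq> {}" unfolding T_def using assms by auto
  have bdd: "\<forall>z\<in>T. z \<le> (\<psi> y - \<psi> m) / (y - m)"
    unfolding T_def using three_slope assms by auto
  have upper: "z \<le> s" if "z \<in> T" for z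
    unfolding s_def using bdd that by (meson bdd_aboveI cSup_upper)
  have lower: "s \<le> (\<psi> u - \<psi> m) / (u - m)" if "\<phi> u < \<infinity>" "m < u" for u
    unfolding s_def using ne that three_slope
    by (intro cSup_least) (auto simp: T_def)
  have "ereal (\<psi> m + s * (t - m)) \<le> \<phi> t" for t
  proof (cases "\<phi> t < \<infinity>")
    case False then show ?thesis by simp
  next
    case fin: True
    have "\<psi> m + s * (t - m) \<le> \<psi> t"
    proof (cases t m rule: linorder_cases)
      case less
      then have "(\<psi> m - \<psi> t) / (m - t) \<le> s" using upper fin unfolding T_def by auto
      then show ?thesis using less by (simp add: field_simps)
    next
      case equal then show ?thesis by simp
    next
      case greater
      then have "s \<le> (\<psi> t - \<psi> m) / (t - m)" using lower fin by auto
      then show ?thesis using greater by (simp add: field_simps)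
    qed
    then show ?thesis using ef_real[OF fin] unfolding \<psi>_def by (metis ereal_less_eq(3))
  qed
  then show "\<exists>s. \<forall>t. ereal (\<psi> m + s * (t - m)) \<le> \<phi> t" by blast
qed

lemma minorant: "\<exists>a b. \<forall>t. ereal (a + b * t) \<le> \<phi> t"
proof (cases "\<exists>p. p \<noteq> 1 \<and> \<phi> p < \<infinity>")
  case True
  then obtain p where p: "p \<noteq> 1" "\<phi> p < \<infinity>" by auto
  have one: "\<phi> 1 < \<infinity>" using ef_one by simp
  define x where "x = min p 1"
  define y where "y = max p 1"
  have "\<phi> x < \<infinity>" "\<phi> y < \<infinity>" "x < (x + y) / 2" "(x + y)/2 < y"
    using p one unfolding x_def y_def by (auto simp: min_def max_def)
  from subgrad(2)[OF this] obtain s where "\<forall>t. ereal (\<psi> ((x+y)/2) + s * (t - (x+y)/2)) \<le> \<phi> t" by blast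
  then show ?thesis
    by (intro exI[of _ "\<psi> ((x+y)/2) - s * ((x+y)/2)"] exI[of _ s]) (simp add: algebra_simps)
next
  case False
  have "ereal (0 + 0 * t) \<le> \<phi> t" for t
    using False ef_one by (cases "t = 1") auto
  then show ?thesis by blast
qed

lemma phi_right0: "(\<phi> \<longlongrightarrow> \<phi> 0) (at_right 0)"
  unfolding order_tendsto_iff
proof safe
  fix y assume y: "y < \<phi> 0"
  have "\<phi> 0 \<le> Liminf (at 0) \<phi>" using ef unfolding entropy_function_def lsc_ereal_def by auto
  then have "\<forall>\<^sub>F x in at 0. y < \<phi> x" using le_Liminf_iff[THEN iffD1, rule_format, OF _ y] by blast
  then show "\<forall>\<^sub>F x in at_right 0. y < \<phi> x" unfolding eventually_at_split by (rule conjunct2)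
next
  fix u assume u: "\<phi> 0 < u"
  then have fin: "\<phi> 0 < \<infinity>" by auto
  define r where "r = \<psi> 0"
  have r: "\<phi> 0 = ereal r" using ef_real[OF fin] unfolding r_def \<psi>_def .
  have bound: "\<phi> t \<le> ereal ((1 - t) * r)" if "0 < t" "t < 1" for t
  proof -
    have "\<phi> t = \<phi> ((1 - t) * 0 + t * 1)" by simp
    also have "\<dots> \<le> ereal (1 - t) * \<phi> 0 + ereal t * \<phi> 1" using that by (intro ef_conv) auto
    also have "\<dots> = ereal ((1 - t) * r)" using r ef_one by simp
    finally show ?thesis .
  qed
  show "\<forall>\<^sub>F x in at_right 0. \<phi> x < u"
  proof (cases u)
    case (real u0)
    then have "r < u0" using u r by simp
    have "((\<lambda>t. (1 - t) * r) \<longlongrightarrow> (1 - 0) * r) (at_right 0)"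
      by (intro tendsto_intros)
    then have "\<forall>\<^sub>F t in at_right 0. (1 - t) * r < u0" using order_tendstoD(2)[of _ "(1 - 0) * r"] \<open>r < u0\<close> by simp
    moreover have "\<forall>\<^sub>F t in at_right (0::real). t \<in> {0<..<1}" by (rule eventually_at_right_real) simp
    ultimately show ?thesis
    proof eventually_elim
      case (elim t)
      then have "\<phi> t \<le> ereal ((1 - t) * r)" using bound by auto
      also have "\<dots> < u" using elim real by simp
      finally show ?case .
    qed
  next
    case PInf
    have "\<forall>\<^sub>F t in at_right (0::real). t \<in> {0<..<1}" by (rule eventually_at_right_real) simp
    then show ?thesis
    proof eventually_elim
      case (elim t)
      then have "\<phi> t \<le> ereal ((1 - t) * r)" using bound by auto
      also have "\<dots> < u" using PInf by simp
      finally show ?case .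
    qed
  qed (use u in auto)
qed


lemma phi_conv_eq: "phi_conv \<phi> = \<phi>"
proof
  fix t show "phi_conv \<phi> t = \<phi> t"
    unfolding phi_conv_def using tendsto_Lim[OF _ phi_right0] by auto
qed

lemma phi_inf_nminf: "phi_inf \<phi> \<noteq> -\<infinity>"
proof (cases "\<exists>t0>1. \<phi> t0 = \<infinity>")
  case True
  then obtain t0 where t0: "t0 > 1" "\<phi> t0 = \<infinity>" by auto
  have "\<phi> t = \<infinity>" if "t \<ge> t0" for t
  proof (rule ccontr)
    assume "\<phi> t \<noteq> \<infinity>"
    then have "\<phi> t0 < \<infinity>" using ef_dom_between[of 1 t t0] ef_one that t0 by (auto simp: less_top)
    then show False using t0 by auto
  qed
  have "\<forall>\<^sub>F t in at_top. t \<ge> max t0 1" by (rule eventually_ge_at_top)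
  then have "\<forall>\<^sub>F t in at_top. \<phi> t / ereal t = \<infinity>"
  proof (rule eventually_mono)
    fix t assume "t \<ge> max t0 1"
    then have "\<phi> t = \<infinity>" "t > 0" using \<open>\<And>t. t \<ge> t0 \<Longrightarrow> \<phi> t = \<infinity>\<close> t0 by auto
    then show "\<phi> t / ereal t = \<infinity>" by simp
  qed
  then have "((\<lambda>t. \<phi> t / ereal t) \<longlongrightarrow> \<infinity>) at_top"
    by (rule tendsto_eventually)
  then have "phi_inf \<phi> = \<infinity>" unfolding phi_inf_def by (intro tendsto_Lim) auto
  then show ?thesis by simp
next
  case False
  then have fin: "\<phi> t < \<infinity>" if "t > 1" for t using that by (auto simp: less_top)
  define h where "h t = \<psi> t / (t - 1)" for t
  have mono: "h s \<le> h t" if "1 < s" "s \<le> t" for s t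
  proof (cases "s = t")
    case False
    then have st: "s < t" using that by auto
    define l where "l = (s - 1) / (t - 1)"
    have hh: "l * (t - 1) = s - 1" unfolding l_def using st that by simp
    have s: "s = (1 - l) * 1 + l * t" using hh by (simp add: algebra_simps)
    have "0 \<le> l" "l \<le> 1" unfolding l_def using st that by auto
    then have "\<psi> s \<le> (1 - l) * \<psi> 1 + l * \<psi> t"
      using ef_conv_real(2)[of 1 t l] fin[of t] ef_one s st that by auto
    then have "\<psi> s \<le> l * \<psi> t" using ef_one by (simp add: \<psi>_def)
    then show ?thesis unfolding h_def l_def using st that by (simp add: field_simps)
  qed simp
  define L where "L = (SUP t\<in>{1<..}. ereal (h t))"
  have hL: "((\<lambda>t. ereal (h t)) \<longlongrightarrow> L) at_top"
    unfolding order_tendsto_iff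
  proof safe
    fix l assume "l < L"
    then obtain t where t: "t > 1" "l < ereal (h t)" unfolding L_def less_SUP_iff by auto
    have "\<forall>\<^sub>F x in at_top. x \<ge> t" by (rule eventually_ge_at_top)
    then show "\<forall>\<^sub>F x in at_top. l < ereal (h x)"
    proof (rule eventually_mono)
      fix x assume "x \<ge> t"
      then have "h t \<le> h x" using mono t by auto
      then show "l < ereal (h x)" using t(2) by (simp add: less_le_trans)
    qed
  next
    fix u assume "L < u"
    have "\<forall>\<^sub>F x in at_top. x > (1::real)" by (rule eventually_gt_at_top)
    then show "\<forall>\<^sub>F x in at_top. ereal (h x) < u"
    proof (rule eventually_mono)
      fix x :: real assume "x > 1"
      then have "ereal (h x) \<le> L" unfolding L_def by (intro SUP_upper) auto
      then show "ereal (h x) < u" using \<open>L < u\<close> by (rule le_less_trans)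
    qed
  qed
  have "((\<lambda>t. (t - 1) / t) \<longlongrightarrow> (1::real)) at_top"
  proof -
    have "((\<lambda>t. inverse t) \<longlongrightarrow> (0::real)) at_top"
      using tendsto_inverse_0_at_top[OF filterlim_ident] by simp
    then have "((\<lambda>t. 1 - inverse t) \<longlongrightarrow> (1 - 0::real)) at_top"
      by (intro tendsto_intros)
    moreover have "\<forall>\<^sub>F t in at_top. 1 - inverse t = (t - 1) / (t::real)"
      using eventually_gt_at_top[of 0] by (rule eventually_mono) (simp add: field_simps)
    ultimately show ?thesis using tendsto_cong[THEN iffD1] by simp
  qed
  then have "((\<lambda>t. ereal ((t - 1) / t)) \<longlongrightarrow> ereal 1) at_top" by (rule tendsto_ereal)
  from tendsto_mult_ereal[OF hL this] have lim: "((\<lambda>t. ereal (h t) * ereal ((t - 1) / t)) \<longlongrightarrow> L) at_top"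
    by simp
  have "\<forall>\<^sub>F t in at_top. ereal (h t) * ereal ((t - 1) / t) = \<phi> t / ereal t"
    using eventually_gt_at_top[of 1]
  proof (rule eventually_mono)
    fix t :: real assume elim: "t > 1"
    have e: "\<phi> t = ereal (\<psi> t)" using ef_real[OF fin[OF elim]] unfolding \<psi>_def .
    have "\<phi> t / ereal t = ereal (\<psi> t / t)"
      unfolding e using elim by simp
    also have "\<dots> = ereal (h t * ((t - 1) / t))" unfolding h_def using elim by simp
    finally show "ereal (h t) * ereal ((t - 1) / t) = \<phi> t / ereal t" by simp
  qed
  then have "((\<lambda>t. \<phi> t / ereal t) \<longlongrightarrow> L) at_top" by (rule tendsto_cong[THEN iffD1, OF _ lim])
  then have "phi_inf \<phi> = L" unfolding phi_inf_def by (intro tendsto_Lim) auto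
  moreover have "ereal (h 2) \<le> L" unfolding L_def by (intro SUP_upper) auto
  ultimately show ?thesis by auto
qed

end

lemma e2_pos: "enn2ereal (e2ennreal x) = max 0 x"
  by (cases "x \<le> 0") (auto simp: e2ennreal_neg enn2ereal_e2ennreal max_def zero_ennreal.rep_eq)

lemma ereal_diff_add_split:
  fixes x y b c :: ereal
  assumes "0 \<le> x" "0 \<le> y" "0 \<le> b" "0 \<le> c" "b \<noteq> \<infinity>" "c \<noteq> \<infinity>"
  shows "(x + y) - (b + c) = (x - b) + (y - c)"
  using assms by (cases x y rule: ereal2_cases; cases b c rule: ereal2_cases) auto

lemma enn_sum_diff:
  assumes "finite I" "\<forall>i\<in>I. b i \<noteq> \<top>"
  shows "enn2ereal (\<Sum>i\<in>I. a i) - enn2ereal (\<Sum>i\<in>I. b i) = (\<Sum>i\<in>I. enn2ereal (a i) - enn2ereal (b i))"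
  using assms
proof (induction I rule: finite_induct)
  case empty then show ?case by (simp add: zero_ennreal.rep_eq)
next
  case (insert j I)
  have "enn2ereal (b j) \<noteq> \<infinity>" "enn2ereal (sum b I) \<noteq> \<infinity>"
    using insert by (auto simp: enn2ereal_eq_top_iff ennreal_sum_eq_top)
  then show ?case using insert
    by (simp add: plus_ennreal.rep_eq ereal_diff_add_split enn2ereal_nonneg)
qed

lemma ext_int_mono_AE:
  assumes "AE x in M. f x \<le> g x"
  shows "ext_int M f \<le> ext_int M g"
  unfolding ext_int_def
proof (rule ereal_minus_mono)
  show "enn2ereal (\<integral>\<^sup>+ x. e2ennreal (f x) \<partial>M) \<le> enn2ereal (\<integral>\<^sup>+ x. e2ennreal (g x) \<partial>M)"
    using assms by (intro less_eq_ennreal.rep_eq[THEN iffD1]  nn_integral_mono_AE) (auto elim!: eventually_mono intro: e2ennreal_mono)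
  show "enn2ereal (\<integral>\<^sup>+ x. e2ennreal (- g x) \<partial>M) \<le> enn2ereal (\<integral>\<^sup>+ x. e2ennreal (- f x) \<partial>M)"
    using assms by (intro less_eq_ennreal.rep_eq[THEN iffD1]  nn_integral_mono_AE) (auto elim!: eventually_mono intro: e2ennreal_mono)
qed

lemma ext_int_cong_AE:
  assumes "AE x in M. f x = g x"
  shows "ext_int M f = ext_int M g"
  using ext_int_mono_AE[of f g M] ext_int_mono_AE[of g f M] assms
  by (metis (mono_tags, lifting) dual_order.eq_iff eventually_mono)

lemma ext_int_real:
  assumes "integrable M h"
  shows "ext_int M (\<lambda>x. ereal (h x)) = ereal (integral\<^sup>L M h)"
proof -
  have fin1: "(\<integral>\<^sup>+ x. ennreal (h x) \<partial>M) < \<top>"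
    using integrableD(2)[OF assms] by (simp add: top.not_eq_extremum)
  have fin2: "(\<integral>\<^sup>+ x. ennreal (- h x) \<partial>M) < \<top>"
    using integrableD(3)[OF assms] by (simp add: top.not_eq_extremum)
  have "ext_int M (\<lambda>x. ereal (h x)) = enn2ereal (\<integral>\<^sup>+ x. ennreal (h x) \<partial>M) - enn2ereal (\<integral>\<^sup>+ x. ennreal (- h x) \<partial>M)"
    unfolding ext_int_def by (simp add: e2ennreal_ereal)
  also have "\<dots> = ereal (enn2real (\<integral>\<^sup>+ x. ennreal (h x) \<partial>M)) - ereal (enn2real (\<integral>\<^sup>+ x. ennreal (- h x) \<partial>M))"
    using fin1 fin2 by (metis enn2ereal_ennreal enn2real_nonneg ennreal_enn2real)
  also have "\<dots> = ereal (integral\<^sup>L M h)" using real_lebesgue_integral_def[OF assms] by simp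
  finally show ?thesis .
qed

lemma ext_int_distr:
  assumes "T \<in> measurable M N" "f \<in> borel_measurable N"
  shows "ext_int (distr M N T) f = ext_int M (\<lambda>x. f (T x))"
proof -
  have m1: "(\<lambda>x. e2ennreal (f x)) \<in> borel_measurable N"
    using measurable_compose[OF assms(2) measurable_e2ennreal] by simp
  have uminus_f: "(\<lambda>x. - f x) \<in> borel_measurable N" using assms(2) by measurable
  have m2: "(\<lambda>x. e2ennreal (- f x)) \<in> borel_measurable N"
    using measurable_compose[OF uminus_f measurable_e2ennreal] by simp
  have m1': "(\<lambda>x. e2ennreal (f x)) \<in> borel_measurable (distr M N T)"
    using m1 by (simp add: measurable_cong_sets[OF sets_distr refl])
  have m2': "(\<lambda>x. e2ennreal (- f x)) \<in> borel_measurable (distr M N T)"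
    using m2 by (simp add: measurable_cong_sets[OF sets_distr refl])
  show ?thesis unfolding ext_int_def
    using nn_integral_distr[OF assms(1) m1'] nn_integral_distr[OF assms(1) m2'] by simp
qed

lemma ext_int_split:
  assumes I: "finite I" and dis: "disjoint_family_on A I" and A: "\<And>i. i \<in> I \<Longrightarrow> A i \<in> sets M"
    and f: "f \<in> borel_measurable M" and cov: "AE x in M. x \<in> (\<Union>i\<in>I. A i)"
    and neg: "\<And>i. i \<in> I \<Longrightarrow> (\<integral>\<^sup>+ x. e2ennreal (- f x) * indicator (A i) x \<partial>M) \<noteq> \<top>"
  shows "ext_int M f = (\<Sum>i\<in>I. ext_int M (\<lambda>x. if x \<in> A i then f x else 0))"
proof -
  have split: "(\<integral>\<^sup>+ x. e2ennreal (g x) \<partial>M) = (\<Sum>i\<in>I. \<integral>\<^sup>+ x. e2ennreal (g x) * indicator (A i) x \<partial>M)"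
    if g: "g \<in> borel_measurable M" for g :: "_ \<Rightarrow> ereal"
  proof -
    have gm: "(\<lambda>x. e2ennreal (g x)) \<in> borel_measurable M"
      using measurable_compose[OF g measurable_e2ennreal] by simp
    have "(\<integral>\<^sup>+ x. e2ennreal (g x) \<partial>M) = (\<integral>\<^sup>+ x. (\<Sum>i\<in>I. e2ennreal (g x) * indicator (A i) x) \<partial>M)"
    proof (rule nn_integral_cong_AE)
      show "AE x in M. e2ennreal (g x) = (\<Sum>i\<in>I. e2ennreal (g x) * indicator (A i) x)"
        using cov
      proof (rule eventually_mono)
        fix x assume "x \<in> (\<Union>i\<in>I. A i)"
        then obtain j where j: "j \<in> I" "x \<in> A j" by auto
        have "(\<Sum>i\<in>I. e2ennreal (g x) * indicator (A i) x) = (\<Sum>i\<in>{j}. e2ennreal (g x) * indicator (A i) x)"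
          using dis j I by (intro sum.mono_neutral_right) (auto simp: disjoint_family_on_def indicator_def)
        then show "e2ennreal (g x) = (\<Sum>i\<in>I. e2ennreal (g x) * indicator (A i) x)" using j by simp
      qed
    qed
    also have "\<dots> = (\<Sum>i\<in>I. \<integral>\<^sup>+ x. e2ennreal (g x) * indicator (A i) x \<partial>M)"
      using gm A by (intro nn_integral_sum) auto
    finally show ?thesis .
  qed
  have ind: "(\<integral>\<^sup>+ x. e2ennreal (g x) * indicator (A i) x \<partial>M) = (\<integral>\<^sup>+ x. e2ennreal (if x \<in> A i then g x else 0) \<partial>M)"
    for g :: "_ \<Rightarrow> ereal" and i
    by (intro nn_integral_cong) (auto simp: indicator_def)
  have ind2: "(\<integral>\<^sup>+ x. e2ennreal (- f x) * indicator (A i) x \<partial>M) = (\<integral>\<^sup>+ x. e2ennreal (- (if x \<in> A i then f x else 0)) \<partial>M)"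
    for i
    by (intro nn_integral_cong) (auto simp: indicator_def)
  have uminus_f: "(\<lambda>x. - f x) \<in> borel_measurable M" using f by measurable
  have "ext_int M f = enn2ereal (\<Sum>i\<in>I. \<integral>\<^sup>+ x. e2ennreal (f x) * indicator (A i) x \<partial>M)
       - enn2ereal (\<Sum>i\<in>I. \<integral>\<^sup>+ x. e2ennreal (- f x) * indicator (A i) x \<partial>M)"
    unfolding ext_int_def using split[OF f] split[OF uminus_f] by simp
  also have "\<dots> = (\<Sum>i\<in>I. enn2ereal (\<integral>\<^sup>+ x. e2ennreal (f x) * indicator (A i) x \<partial>M)
       - enn2ereal (\<integral>\<^sup>+ x. e2ennreal (- f x) * indicator (A i) x \<partial>M))"
    using I neg by (intro enn_sum_diff) auto
  also have "\<dots> = (\<Sum>i\<in>I. ext_int M (\<lambda>x. if x \<in> A i then f x else 0))"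
    unfolding ext_int_def ind2 ind ..
  finally show ?thesis .
qed

lemma ext_int_const_on:
  assumes "A \<in> sets M" "emeasure M A \<noteq> \<infinity>" "c \<noteq> -\<infinity>"
  shows "ext_int M (\<lambda>x. if x \<in> A then c else 0) = ereal (measure M A) * c"
proof -
  have p: "(\<integral>\<^sup>+ x. e2ennreal (if x \<in> A then c else 0) \<partial>M) = e2ennreal c * emeasure M A"
    using assms by (subst nn_integral_cmult_indicator[symmetric]) (auto intro!: nn_integral_cong simp: indicator_def)
  have n: "(\<integral>\<^sup>+ x. e2ennreal (- (if x \<in> A then c else 0)) \<partial>M) = e2ennreal (- c) * emeasure M A"
    using assms by (subst nn_integral_cmult_indicator[symmetric]) (auto intro!: nn_integral_cong simp: indicator_def)
  have em: "enn2ereal (emeasure M A) = ereal (measure M A)"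
    using assms by (simp add: emeasure_eq_ennreal_measure)
  show ?thesis unfolding ext_int_def p n times_ennreal.rep_eq e2_pos em
    using assms(3) by (cases c) (auto simp: max_def)
qed

lemma ef_measurable:
  assumes ef: "entropy_function \<phi>"
  shows "\<phi> \<in> borel_measurable borel"
proof (rule borel_measurableI_greater)
  fix y :: ereal
  have op: "open {x. y < \<phi> x}"
  proof (subst open_subopen, intro ballI)
    fix x assume "x \<in> {x. y < \<phi> x}"
    then have yx: "y < \<phi> x" by simp
    have "\<phi> x \<le> Liminf (at x) \<phi>" using ef unfolding entropy_function_def lsc_ereal_def by auto
    then have "\<forall>\<^sub>F z in at x. y < \<phi> z" using le_Liminf_iff[THEN iffD1, rule_format, OF _ yx] by blast
    then obtain T where T: "open T" "x \<in> T" "\<forall>z\<in>T. z \<noteq> x \<longrightarrow> y < \<phi> z"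
      unfolding eventually_at_topological by auto
    then show "\<exists>T. open T \<and> x \<in> T \<and> T \<subseteq> {x. y < \<phi> x}" using yx by (intro exI[of _ T]) auto
  qed
  show "{x \<in> space borel. y < \<phi> x} \<in> sets borel" using op by simp
qed

lemma piecewise_measurable:
  assumes S: "finite S" "\<And>x. x \<in> S \<Longrightarrow> {x} \<in> sets M"
  shows "(\<lambda>y. if y \<in> S then K y else (c::'b::topological_space)) \<in> borel_measurable M"
proof (rule measurableI)
  fix A :: "'b set" assume "A \<in> sets borel"
  have SM: "S \<inter> space M \<in> sets M"
  proof -
    have "S \<inter> space M = (\<Union>x\<in>S \<inter> space M. {x})" by auto
    also have "\<dots> \<in> sets M" using S by (intro sets.finite_UN) auto
    finally show ?thesis .
  qed
  have T: "(\<Union>x\<in>{x\<in>S. K x \<in> A} \<inter> space M. {x}) \<in> sets M"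
    using S by (intro sets.finite_UN) auto
  have eq: "(\<lambda>y. if y \<in> S then K y else c) -` A \<inter> space M =
     (\<Union>x\<in>{x\<in>S. K x \<in> A} \<inter> space M. {x}) \<union> (if c \<in> A then space M - (S \<inter> space M) else {})"
    by (auto split: if_splits)
  show "(\<lambda>y. if y \<in> S then K y else c) -` A \<inter> space M \<in> sets M"
    unfolding eq using T SM by auto
qed simp

lemma ext_int_piecewise:
  assumes M: "finite_measure M" and S: "finite S" "S \<subseteq> space M" "\<And>x. x \<in> S \<Longrightarrow> {x} \<in> sets M"
    and K: "\<And>x. x \<in> S \<Longrightarrow> K x \<noteq> -\<infinity>" and c: "c \<noteq> -\<infinity>"
  shows "ext_int M (\<lambda>y. if y \<in> S then K y else c)
     = (\<Sum>x\<in>S. ereal (measure M {x}) * K x) + ereal (measure M (space M - S)) * c"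
proof -
  interpret finite_measure M by fact
  define f where "f = (\<lambda>y. if y \<in> S then K y else c)"
  define A where "A = (\<lambda>i. case i of Some x \<Rightarrow> {x} | None \<Rightarrow> space M - S)"
  define C where "C = (\<lambda>i. case i of Some x \<Rightarrow> K x | None \<Rightarrow> c)"
  define I where "I = insert None (Some ` S)"
  have SM: "S \<in> sets M"
  proof -
    have "S = (\<Union>x\<in>S. {x})" by auto
    also have "\<dots> \<in> sets M" using S by (intro sets.finite_UN) auto
    finally show ?thesis .
  qed
  have I: "finite I" unfolding I_def using S by auto
  have Asets: "A i \<in> sets M" if "i \<in> I" for i
    using that S SM unfolding I_def A_def by auto
  have dis: "disjoint_family_on A I"
    unfolding disjoint_family_on_def I_def A_def by auto
  have fm: "f \<in> borel_measurable M" unfolding f_def by (rule piecewise_measurable) (use S in auto)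
  have cov: "AE x in M. x \<in> (\<Union>i\<in>I. A i)"
    by (rule AE_I2) (auto simp: I_def A_def)
  have onA: "\<forall>x\<in>space M. (if x \<in> A i then f x else 0) = (if x \<in> A i then C i else 0)" if "i \<in> I" for i
    using that unfolding I_def A_def C_def f_def by auto
  have Cn: "C i \<noteq> -\<infinity>" if "i \<in> I" for i using that K c unfolding I_def C_def by auto
  have neg: "(\<integral>\<^sup>+ x. e2ennreal (- f x) * indicator (A i) x \<partial>M) \<noteq> \<top>" if i: "i \<in> I" for i
  proof -
    have "(\<integral>\<^sup>+ x. e2ennreal (- f x) * indicator (A i) x \<partial>M) = (\<integral>\<^sup>+ x. e2ennreal (- C i) * indicator (A i) x \<partial>M)"
      using onA[OF i] by (intro nn_integral_cong) (auto simp: indicator_def split: if_splits)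
    also have "\<dots> = e2ennreal (- C i) * emeasure M (A i)" using Asets[OF i] by (rule nn_integral_cmult_indicator)
    also have "\<dots> \<noteq> \<top>"
    proof -
      have "- C i \<noteq> \<infinity>" using Cn[OF i] by (cases "C i") auto
      then have "enn2ereal (e2ennreal (- C i)) \<noteq> \<infinity>" unfolding e2_pos by (auto simp: max_def)
      then have "e2ennreal (- C i) \<noteq> \<top>" by (metis enn2ereal_top)
      then show ?thesis using emeasure_finite[of "A i"] by (simp add: ennreal_mult_eq_top_iff)
    qed
    finally show ?thesis .
  qed
  have "ext_int M f = (\<Sum>i\<in>I. ext_int M (\<lambda>x. if x \<in> A i then f x else 0))"
    by (rule ext_int_split[OF I dis Asets fm cov neg])
  also have "\<dots> = (\<Sum>i\<in>I. ereal (measure M (A i)) * C i)"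
  proof (rule sum.cong[OF refl])
    fix i assume i: "i \<in> I"
    have "ext_int M (\<lambda>x. if x \<in> A i then f x else 0) = ext_int M (\<lambda>x. if x \<in> A i then C i else 0)"
      using onA[OF i] by (intro ext_int_cong_AE AE_I2) auto
    also have "\<dots> = ereal (measure M (A i)) * C i"
      using Asets[OF i] Cn[OF i] by (intro ext_int_const_on) auto
    finally show "ext_int M (\<lambda>x. if x \<in> A i then f x else 0) = ereal (measure M (A i)) * C i" .
  qed
  also have "\<dots> = ereal (measure M (space M - S)) * c + (\<Sum>i\<in>Some ` S. ereal (measure M (A i)) * C i)"
    unfolding I_def using S by (subst sum.insert) (auto simp: A_def C_def)
  also have "(\<Sum>i\<in>Some ` S. ereal (measure M (A i)) * C i) = (\<Sum>x\<in>S. ereal (measure M {x}) * K x)"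
    by (subst sum.reindex) (auto simp: A_def C_def)
  finally show ?thesis unfolding f_def by (simp add: add.commute)
qed

lemma ext_int_finite_support:
  assumes M: "finite_measure M" and S: "finite S" "S \<subseteq> space M" "\<And>x. x \<in> S \<Longrightarrow> {x} \<in> sets M"
    and null: "emeasure M (space M - S) = 0"
    and K: "\<And>x. x \<in> S \<Longrightarrow> f x \<noteq> -\<infinity>"
  shows "ext_int M f = (\<Sum>x\<in>S. ereal (measure M {x}) * f x)"
proof -
  interpret finite_measure M by fact
  have SM: "S \<in> sets M"
  proof -
    have "S = (\<Union>x\<in>S. {x})" by auto
    also have "\<dots> \<in> sets M" using S by (intro sets.finite_UN) auto
    finally show ?thesis .
  qed
  have "AE x in M. x \<in> S"
    using null SM by (subst AE_iff_measurable[of "space M - S"]) auto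
  then have "ext_int M f = ext_int M (\<lambda>y. if y \<in> S then f y else 0)"
    by (intro ext_int_cong_AE) (auto elim!: eventually_mono)
  also have "\<dots> = (\<Sum>x\<in>S. ereal (measure M {x}) * f x) + ereal (measure M (space M - S)) * 0"
    by (rule ext_int_piecewise[OF M S K]) auto
  finally show ?thesis by simp
qed

lemma sum_meas:
  assumes "sets N = sets M"
  shows "sets (sum_meas M N) = sets M" "space (sum_meas M N) = space M"
    "A \<in> sets M \<Longrightarrow> emeasure (sum_meas M N) A = emeasure M A + emeasure N A"
proof -
  show "sets (sum_meas M N) = sets M" unfolding sum_meas_def by (simp add: sets.sets_measure_of_eq)
  show "space (sum_meas M N) = space M" unfolding sum_meas_def by (simp add: sets.space_measure_of_eq)
  assume A: "A \<in> sets M"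
  have pos: "positive (sets M) (\<lambda>A. emeasure M A + emeasure N A)"
    unfolding positive_def by simp
  have ca: "countably_additive (sets M) (\<lambda>A. emeasure M A + emeasure N A)"
  proof (rule countably_additiveI)
    fix F :: "nat \<Rightarrow> _" assume F: "range F \<subseteq> sets M" "disjoint_family F" "\<Union> (range F) \<in> sets M"
    have "(\<Sum>i. emeasure M (F i) + emeasure N (F i)) = (\<Sum>i. emeasure M (F i)) + (\<Sum>i. emeasure N (F i))"
      by (rule suminf_add[symmetric]) auto
    also have "\<dots> = emeasure M (\<Union> (range F)) + emeasure N (\<Union> (range F))"
      using F assms by (simp add: suminf_emeasure)
    finally show "(\<Sum>i. emeasure M (F i) + emeasure N (F i)) = emeasure M (\<Union> (range F)) + emeasure N (\<Union> (range F))" .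
  qed
  show "emeasure (sum_meas M N) A = emeasure M A + emeasure N A"
    unfolding sum_meas_def by (rule emeasure_measure_of_sigma[OF sets.sigma_algebra_axioms pos ca A])
qed

lemma singleton_borel: "{x} \<in> sets (borel :: 'a::t1_space measure)"
  by (simp add: closed_singleton)

lemma finite_borel: "finite A \<Longrightarrow> A \<in> sets (borel :: 'a::t1_space measure)"
  by (simp add: finite_imp_closed)

lemma density_piece:
  fixes M :: "'a::t1_space measure"
  assumes M: "sets M = sets borel" and S: "finite S" and A: "A \<in> sets borel"
  shows "emeasure (density M (\<lambda>x. if x \<in> S then c x else d)) A
     = (\<Sum>x\<in>S \<inter> A. c x * emeasure M {x}) + d * emeasure M (A - S)"
proof -
  have sing: "{x} \<in> sets M" for x using M singleton_borel by auto
  have gm: "(\<lambda>x. if x \<in> S then c x else d) \<in> borel_measurable M"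
    by (rule piecewise_measurable) (use S sing in auto)
  have AM: "A \<in> sets M" using A M by simp
  have SM: "S \<in> sets M"
  proof -
    have "S = (\<Union>x\<in>S. {x})" by auto
    also have "\<dots> \<in> sets M" using S sing by (intro sets.finite_UN) auto
    finally show ?thesis .
  qed
  have "emeasure (density M (\<lambda>x. if x \<in> S then c x else d)) A
      = (\<integral>\<^sup>+ x. (if x \<in> S then c x else d) * indicator A x \<partial>M)"
    using gm AM by (rule emeasure_density)
  also have "\<dots> = (\<integral>\<^sup>+ x. (\<Sum>y\<in>S \<inter> A. c y * indicator {y} x) + d * indicator (A - S) x \<partial>M)"
  proof (rule nn_integral_cong)
    fix x
    show "(if x \<in> S then c x else d) * indicator A x = (\<Sum>y\<in>S \<inter> A. c y * indicator {y} x) + d * indicator (A - S) x"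
    proof (cases "x \<in> S \<inter> A")
      case True
      then have "(\<Sum>y\<in>S \<inter> A. c y * indicator {y} x) = (\<Sum>y\<in>{x}. c y * indicator {y} x)"
        using S by (intro sum.mono_neutral_right) auto
      then show ?thesis using True by simp
    next
      case False
      then have "(\<Sum>y\<in>S \<inter> A. c y * indicator {y} x) = 0" by (intro sum.neutral) (auto simp: indicator_def)
      then show ?thesis using False by (auto simp: indicator_def)
    qed
  qed
  also have "\<dots> = (\<integral>\<^sup>+ x. (\<Sum>y\<in>S \<inter> A. c y * indicator {y} x) \<partial>M) + (\<integral>\<^sup>+ x. d * indicator (A - S) x \<partial>M)"
    using sing AM SM by (intro nn_integral_add) auto
  also have "(\<integral>\<^sup>+ x. (\<Sum>y\<in>S \<inter> A. c y * indicator {y} x) \<partial>M) = (\<Sum>y\<in>S \<inter> A. \<integral>\<^sup>+ x. c y * indicator {y} x \<partial>M)"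
    using sing by (intro nn_integral_sum) auto
  also have "\<dots> = (\<Sum>y\<in>S \<inter> A. c y * emeasure M {y})"
    using sing by (intro sum.cong refl nn_integral_cmult_indicator) auto
  also have "(\<integral>\<^sup>+ x. d * indicator (A - S) x \<partial>M) = d * emeasure M (A - S)"
    using AM SM by (intro nn_integral_cmult_indicator) auto
  finally show ?thesis .
qed

locale setting =
  fixes Z :: "'a::euclidean_space set"
    and ell :: "'a \<Rightarrow> real"
    and \<phi> :: "real \<Rightarrow> ereal"
    and r \<epsilon> :: real
    and n :: nat
    and zh :: "nat \<Rightarrow> 'a"
  assumes Zc: "compact Z"
    and usc: "usc_on Z ell"
    and ef: "entropy_function \<phi>"
    and r: "r \<ge> 0"
    and eps: "0 < \<epsilon>" "\<epsilon> < 1"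
    and n: "n \<ge> 1"
    and zhZ: "\<forall>i\<in>{1..n}. zh i \<in> Z"
    and aZ: "zh (Suc n) \<in> Z" and amax: "\<forall>z\<in>Z. ell z \<le> ell (zh (Suc n))"
    and anot: "zh (Suc n) \<notin> zh ` {1..n}"
begin

abbreviation "S \<equiv> zh ` {1..n}"
abbreviation "a \<equiv> zh (Suc n)"
definition "mh x = real (card {i\<in>{1..n}. zh i = x}) / real n"
abbreviation "cinf \<equiv> phi_inf \<phi>"
abbreviation "muh \<equiv> empirical n zh"

lemma finS: "finite S" by simp

lemma muh_sets: "sets muh = sets borel" "space muh = UNIV"
  unfolding empirical_def by auto

lemma muh_emeasure: "emeasure muh A = ennreal (real (card ({1..n} \<inter> zh -` A)) / real n)"
  if "A \<in> sets borel" for A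
proof -
  have "emeasure muh A = emeasure (measure_pmf (pmf_of_set {1..n})) (zh -` A)"
    unfolding empirical_def using that by (subst emeasure_distr) auto
  also have "\<dots> = ennreal (real (card ({1..n} \<inter> zh -` A)) / real n)"
    using n by (subst emeasure_pmf_of_set) auto
  finally show ?thesis .
qed

lemma muh_prob: "prob_space muh"
  unfolding empirical_def by (rule prob_space.prob_space_distr[OF prob_space_measure_pmf]) auto

lemma muh_finite: "finite_measure muh"
  using muh_prob unfolding prob_space_def by blast

lemma muh_single: "emeasure muh {x} = ennreal (mh x)"
proof -
  have "{1..n} \<inter> zh -` {x} = {i\<in>{1..n}. zh i = x}" by auto
  then show ?thesis using muh_emeasure[of "{x}"] singleton_borel unfolding mh_def by simp
qed

lemma muh_measure_single: "measure muh {x} = mh x"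
  using muh_single unfolding measure_def by (simp add: mh_def)

lemma muh_outside: "emeasure muh (A - S) = 0" if "A \<in> sets borel" for A
proof -
  have "{1..n} \<inter> zh -` (A - S) = {}" by auto
  moreover have "A - S \<in> sets borel" using that finite_borel[of S] by auto
  ultimately show ?thesis using muh_emeasure[of "A - S"] by simp
qed

lemma mh_pos: "x \<in> S \<Longrightarrow> mh x > 0"
  unfolding mh_def using n by (auto intro!: divide_pos_pos simp: card_gt_0_iff)

lemma mh_nonneg: "mh x \<ge> 0" unfolding mh_def by simp


lemma D_formula:
  assumes mu: "prob_space \<mu>" "sets \<mu> = sets borel"
  shows "phi_div \<phi> \<mu> muh = (\<Sum>x\<in>S. ereal (mh x) * \<phi> (measure \<mu> {x} / mh x)) + ereal (measure \<mu> (UNIV - S)) * cinf"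
proof -
  interpret mu: prob_space \<mu> by fact
  have smu: "space \<mu> = UNIV" using sets_eq_imp_space_eq[OF mu(2)] by simp
  define \<rho> where "\<rho> = sum_meas \<mu> muh"
  have sr: "sets \<rho> = sets borel" "space \<rho> = UNIV"
    unfolding \<rho>_def using sum_meas[of muh \<mu>] muh_sets mu(2) smu by auto
  have er: "emeasure \<rho> A = emeasure \<mu> A + emeasure muh A" if "A \<in> sets borel" for A
    unfolding \<rho>_def using sum_meas(3)[of muh \<mu> A] muh_sets mu(2) that by auto
  have fr: "finite_measure \<rho>"
  proof (rule finite_measureI)
    have "emeasure muh UNIV = 1" using prob_space.emeasure_space_1[OF muh_prob] muh_sets(2) by simp
    moreover have "emeasure \<mu> UNIV = 1" using mu.emeasure_space_1 smu by simp
    ultimately show "emeasure \<rho> (space \<rho>) \<noteq> \<infinity>" using er[of UNIV] sr by simp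
  qed
  interpret rho: finite_measure \<rho> by fact
  have mr: "measure \<rho> A = measure \<mu> A + measure muh A" if "A \<in> sets borel" for A
  proof -
    have "ennreal (measure \<rho> A) = ennreal (measure \<mu> A) + ennreal (measure muh A)"
      using er[OF that] rho.emeasure_eq_measure mu.emeasure_eq_measure
        finite_measure.emeasure_eq_measure[OF muh_finite] by metis
    then show ?thesis by (simp add: ennreal_plus[symmetric] del: ennreal_plus)
  qed
  have ms: "measure \<mu> {x} + mh x = measure \<rho> {x}" for x
    using mr[of "{x}"] singleton_borel muh_measure_single by simp
  have rpos: "measure \<rho> {x} > 0" if "x \<in> S" for x
    using ms[of x] mh_pos[OF that] by (metis add_nonneg_pos measure_nonneg)
  define g1 where "g1 x = (if x \<in> S then ennreal (measure \<mu> {x} / measure \<rho> {x}) else 1)" for x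
  define g2 where "g2 x = (if x \<in> S then ennreal (mh x / measure \<rho> {x}) else 0)" for x
  have SA: "S \<inter> A \<in> sets borel" "A - S \<in> sets borel" if "A \<in> sets borel" for A
    using that finite_borel[of S] by auto
  have d1: "density \<rho> g1 = \<mu>"
  proof (rule measure_eqI)
    show "sets (density \<rho> g1) = sets \<mu>" using sr mu by simp
    fix A assume "A \<in> sets (density \<rho> g1)"
    then have A: "A \<in> sets borel" using sr by simp
    have "emeasure (density \<rho> g1) A = (\<Sum>x\<in>S \<inter> A. ennreal (measure \<mu> {x} / measure \<rho> {x}) * emeasure \<rho> {x}) + 1 * emeasure \<rho> (A - S)"
      unfolding g1_def by (rule density_piece[OF sr(1) finS A])
    also have "(\<Sum>x\<in>S \<inter> A. ennreal (measure \<mu> {x} / measure \<rho> {x}) * emeasure \<rho> {x}) = (\<Sum>x\<in>S \<inter> A. emeasure \<mu> {x})"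
    proof (rule sum.cong[OF refl])
      fix x assume x: "x \<in> S \<inter> A"
      have "ennreal (measure \<mu> {x} / measure \<rho> {x}) * emeasure \<rho> {x} = ennreal (measure \<mu> {x} / measure \<rho> {x} * measure \<rho> {x})"
        by (subst ennreal_mult) (auto simp: rho.emeasure_eq_measure)
      also have "\<dots> = emeasure \<mu> {x}" using rpos[of x] x by (simp add: mu.emeasure_eq_measure)
      finally show "ennreal (measure \<mu> {x} / measure \<rho> {x}) * emeasure \<rho> {x} = emeasure \<mu> {x}" .
    qed
    also have "\<dots> = emeasure \<mu> (S \<inter> A)"
      using mu(2) singleton_borel by (intro emeasure_eq_sum_singleton[symmetric]) auto
    also have "emeasure \<rho> (A - S) = emeasure \<mu> (A - S)"
      using er[OF SA(2)[OF A]] muh_outside[OF A] by simp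
    also have "emeasure \<mu> (S \<inter> A) + 1 * emeasure \<mu> (A - S) = emeasure \<mu> ((S \<inter> A) \<union> (A - S))"
      using SA[OF A] mu(2) by (simp, intro plus_emeasure) auto
    also have "(S \<inter> A) \<union> (A - S) = A" by auto
    finally show "emeasure (density \<rho> g1) A = emeasure \<mu> A" .
  qed
  have d2: "density \<rho> g2 = muh"
  proof (rule measure_eqI)
    show "sets (density \<rho> g2) = sets muh" using sr muh_sets by simp
    fix A assume "A \<in> sets (density \<rho> g2)"
    then have A: "A \<in> sets borel" using sr by simp
    have "emeasure (density \<rho> g2) A = (\<Sum>x\<in>S \<inter> A. ennreal (mh x / measure \<rho> {x}) * emeasure \<rho> {x}) + 0 * emeasure \<rho> (A - S)"
      unfolding g2_def by (rule density_piece[OF sr(1) finS A])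
    also have "(\<Sum>x\<in>S \<inter> A. ennreal (mh x / measure \<rho> {x}) * emeasure \<rho> {x}) = (\<Sum>x\<in>S \<inter> A. emeasure muh {x})"
    proof (rule sum.cong[OF refl])
      fix x assume x: "x \<in> S \<inter> A"
      have "ennreal (mh x / measure \<rho> {x}) * emeasure \<rho> {x} = ennreal (mh x / measure \<rho> {x} * measure \<rho> {x})"
        by (subst ennreal_mult) (auto simp: rho.emeasure_eq_measure mh_nonneg)
      also have "\<dots> = emeasure muh {x}" using rpos[of x] x by (simp add: muh_single)
      finally show "ennreal (mh x / measure \<rho> {x}) * emeasure \<rho> {x} = emeasure muh {x}" .
    qed
    also have "\<dots> = emeasure muh (S \<inter> A)"
      using muh_sets singleton_borel by (intro emeasure_eq_sum_singleton[symmetric]) auto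
    also have "emeasure muh (S \<inter> A) + 0 * emeasure \<rho> (A - S) = emeasure muh (S \<inter> A) + emeasure muh (A - S)"
      using muh_outside[OF A] by simp
    also have "\<dots> = emeasure muh ((S \<inter> A) \<union> (A - S))"
      using SA[OF A] muh_sets by (intro plus_emeasure) auto
    also have "(S \<inter> A) \<union> (A - S) = A" by auto
    finally show "emeasure (density \<rho> g2) A = emeasure muh A" .
  qed
  have sing: "{x} \<in> sets \<rho>" for x using sr singleton_borel by simp
  have g1m: "g1 \<in> borel_measurable \<rho>" unfolding g1_def by (rule piecewise_measurable) (use sing in auto)
  have g2m: "g2 \<in> borel_measurable \<rho>" unfolding g2_def by (rule piecewise_measurable) (use sing in auto)
  have ae1: "AE x in \<rho>. g1 x = RN_deriv \<rho> \<mu> x"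
    by (rule rho.RN_deriv_unique[OF g1m d1])
  have ae2: "AE x in \<rho>. g2 x = RN_deriv \<rho> muh x"
    by (rule rho.RN_deriv_unique[OF g2m d2])
  define K where "K x = ereal (mh x / measure \<rho> {x}) * \<phi> (measure \<mu> {x} / mh x)" for x
  have pw: "div_integrand \<phi> (g1 x) (g2 x) = (if x \<in> S then K x else cinf)" for x
  proof (cases "x \<in> S")
    case True
    have pos: "mh x / measure \<rho> {x} > 0" using mh_pos[OF True] rpos[OF True] by simp
    have nn: "measure \<mu> {x} / measure \<rho> {x} \<ge> 0" by simp
    have q: "enn2real (g1 x) / enn2real (g2 x) = measure \<mu> {x} / mh x"
      unfolding g1_def g2_def using True pos nn rpos[OF True] mh_pos[OF True] by simp
    have "g2 x \<noteq> 0" unfolding g2_def using True pos mh_pos[OF True] rpos[OF True] by simp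
    then show ?thesis unfolding div_integrand_def q phi_conv_eq[OF ef] K_def using True pos
      by (simp add: g2_def enn2ereal_ennreal)
  next
    case False
    then show ?thesis unfolding div_integrand_def g1_def g2_def by (simp add: one_ennreal.rep_eq)
  qed
  have "phi_div \<phi> \<mu> muh = ext_int \<rho> (\<lambda>x. div_integrand \<phi> (RN_deriv \<rho> \<mu> x) (RN_deriv \<rho> muh x))"
    unfolding phi_div_def \<rho>_def Let_def ..
  also have "\<dots> = ext_int \<rho> (\<lambda>x. div_integrand \<phi> (g1 x) (g2 x))"
  proof (rule ext_int_cong_AE)
    show "AE x in \<rho>. div_integrand \<phi> (RN_deriv \<rho> \<mu> x) (RN_deriv \<rho> muh x) = div_integrand \<phi> (g1 x) (g2 x)"
      using ae1 ae2 by eventually_elim simp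
  qed
  also have "\<dots> = ext_int \<rho> (\<lambda>x. if x \<in> S then K x else cinf)" unfolding pw ..
  also have "\<dots> = (\<Sum>x\<in>S. ereal (measure \<rho> {x}) * K x) + ereal (measure \<rho> (space \<rho> - S)) * cinf"
  proof (rule ext_int_piecewise[OF fr finS])
    show "S \<subseteq> space \<rho>" using sr by simp
    show "\<And>x. x \<in> S \<Longrightarrow> {x} \<in> sets \<rho>" using sing by simp
    show "cinf \<noteq> -\<infinity>" by (rule phi_inf_nminf[OF ef])
    fix x assume "x \<in> S"
    then have "mh x / measure \<rho> {x} > 0" using mh_pos rpos by simp
    then show "K x \<noteq> -\<infinity>" unfolding K_def using ef_not_minf[OF ef] by (cases "\<phi> (measure \<mu> {x} / mh x)") auto
  qed
  also have "(\<Sum>x\<in>S. ereal (measure \<rho> {x}) * K x) = (\<Sum>x\<in>S. ereal (mh x) * \<phi> (measure \<mu> {x} / mh x))"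
  proof (rule sum.cong[OF refl])
    fix x assume "x \<in> S"
    then have "measure \<rho> {x} * (mh x / measure \<rho> {x}) = mh x" using rpos[of x] by simp
    then show "ereal (measure \<rho> {x}) * K x = ereal (mh x) * \<phi> (measure \<mu> {x} / mh x)"
      unfolding K_def by (simp add: mult.assoc[symmetric])
  qed
  also have "measure \<rho> (space \<rho> - S) = measure \<mu> (UNIV - S)"
  proof -
    have "measure muh (UNIV - S) = 0" using muh_outside[of UNIV] by (simp add: measure_def)
    then show ?thesis using mr[of "UNIV - S"] sr finite_borel[of S] by auto
  qed
  finally show ?thesis .
qed

end

definition DM :: "'b::t1_space pmf \<Rightarrow> 'b measure" where
  "DM Q = distr (measure_pmf Q) borel (\<lambda>x. x)"

lemma DM_sets[simp]: "sets (DM Q) = sets borel" and DM_space[simp]: "space (DM Q) = UNIV"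
  unfolding DM_def by auto

lemma DM_prob: "prob_space (DM Q)"
  unfolding DM_def by (rule prob_space.prob_space_distr[OF prob_space_measure_pmf]) auto

lemma DM_finite: "finite_measure (DM Q)"
  using DM_prob unfolding prob_space_def by blast

lemma DM_emeasure: "A \<in> sets borel \<Longrightarrow> emeasure (DM Q) A = emeasure (measure_pmf Q) A"
  unfolding DM_def by (subst emeasure_distr) auto

lemma DM_single: "measure (DM Q) {y} = pmf Q y"
  using DM_emeasure[of "{y}" Q] singleton_borel unfolding measure_def by (simp add: emeasure_pmf_single)

lemma DM_null: 
  assumes "finite F" "set_pmf Q \<subseteq> F" shows "emeasure (DM Q) (UNIV - F) = 0"
proof -
  have "AE x in measure_pmf Q. x \<notin> UNIV - F"
    using AE_measure_pmf[of Q] by (rule eventually_mono) (use assms in auto)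
  then have "emeasure (measure_pmf Q) (UNIV - F) = 0"
    by (subst AE_iff_measurable[symmetric, where P="\<lambda>x. x \<notin> UNIV - F"]) auto
  then show ?thesis using DM_emeasure[of "UNIV - F" Q] finite_borel[OF assms(1)] by simp
qed

lemma DM_distr:
  assumes "f \<in> borel_measurable borel"
  shows "distr (DM Q) borel f = DM (map_pmf f Q)"
proof (rule measure_eqI)
  show "sets (distr (DM Q) borel f) = sets (DM (map_pmf f Q))" by simp
  fix A assume A: "A \<in> sets (distr (DM Q) borel f)"
  then have "emeasure (distr (DM Q) borel f) A = emeasure (DM Q) (f -` A)"
    using assms by (subst emeasure_distr) (auto simp: measurable_cong_sets[OF DM_sets refl])
  also have "\<dots> = emeasure (measure_pmf Q) (f -` A)"
    using A assms by (intro DM_emeasure) (auto dest: measurable_sets_borel)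
  also have "\<dots> = emeasure (DM (map_pmf f Q)) A"
    using A by (subst DM_emeasure) (auto simp: map_pmf_rep_eq emeasure_distr)
  finally show "emeasure (distr (DM Q) borel f) A = emeasure (DM (map_pmf f Q)) A" .
qed

lemma DM_ext_int:
  assumes "finite F" "set_pmf Q \<subseteq> F" "\<And>y. y \<in> F \<Longrightarrow> f y \<noteq> -\<infinity>"
  shows "ext_int (DM Q) f = (\<Sum>y\<in>F. ereal (pmf Q y) * f y)"
proof -
  have "ext_int (DM Q) f = (\<Sum>y\<in>F. ereal (measure (DM Q) {y}) * f y)"
    by (rule ext_int_finite_support[OF DM_finite assms(1)]) (use DM_null[OF assms(1,2)] assms(3) singleton_borel in auto)
  then show ?thesis by (simp add: DM_single)
qed

context setting
begin

definition "bp pA g = bind_pmf (bernoulli_pmf \<epsilon>) (\<lambda>b. if b then return_pmf pA else map_pmf g (pmf_of_set {1..n}))"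

lemma bp_pmf: "pmf (bp pA g) y = \<epsilon> * (if y = pA then 1 else 0) + (1 - \<epsilon>) * (real (card {i\<in>{1..n}. g i = y}) / real n)"
proof -
  have c: "{1..n} \<inter> g -` {y} = {i\<in>{1..n}. g i = y}" by auto
  have "pmf (bp pA g) y = measure_pmf.expectation (bernoulli_pmf \<epsilon>)
      (\<lambda>b. pmf (if b then return_pmf pA else map_pmf g (pmf_of_set {1..n})) y)"
    unfolding bp_def by (rule pmf_bind)
  also have "\<dots> = pmf (return_pmf pA) y * \<epsilon> + pmf (map_pmf g (pmf_of_set {1..n})) y * (1 - \<epsilon>)"
    using eps by (subst integral_bernoulli_pmf) auto
  also have "pmf (map_pmf g (pmf_of_set {1..n})) y = real (card {i\<in>{1..n}. g i = y}) / real n"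
    using n by (simp add: pmf_map measure_pmf_of_set) (intro arg_cong[where f=card]; auto)
  finally show ?thesis by (simp add: pmf_return indicator_def mult.commute)
qed

lemma bp_map: "map_pmf f (bp pA g) = bp (f pA) (f \<circ> g)"
  unfolding bp_def map_bind_pmf by (intro bind_pmf_cong refl) (auto simp: pmf.map_comp)

lemma bp_support: "set_pmf (bp pA g) \<subseteq> insert pA (g ` {1..n})"
proof
  fix y assume "y \<in> set_pmf (bp pA g)"
  then have "pmf (bp pA g) y \<noteq> 0" by (simp add: set_pmf_iff)
  then show "y \<in> insert pA (g ` {1..n})"
    unfolding bp_pmf by (cases "y = pA") (auto simp: card_eq_0_iff)
qed

lemma a_notin: "a \<notin> S" using anot by simp

lemma zh_ne_a: "1 \<le> i \<Longrightarrow> i \<le> n \<Longrightarrow> zh i \<noteq> a"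
  using anot by (metis atLeastAtMost_iff image_eqI)

lemma bp_inj_pmf:
  assumes inj: "inj_on H (insert a S)" and x: "x \<in> insert a S"
  shows "pmf (bp (H a) (H \<circ> zh)) (H x) = (if x = a then \<epsilon> else (1 - \<epsilon>) * mh x)"
proof -
  have e1: "(H x = H a) = (x = a)" by (rule inj_on_eq_iff[OF inj x]) simp
  have e2: "{i\<in>{1..n}. (H \<circ> zh) i = H x} = {i\<in>{1..n}. zh i = x}"
  proof (rule Collect_cong)
    fix i show "(i \<in> {1..n} \<and> (H \<circ> zh) i = H x) = (i \<in> {1..n} \<and> zh i = x)"
      using inj_on_eq_iff[OF inj, of "zh i" x] x by auto
  qed
  have e3: "{i\<in>{1..n}. zh i = a} = {}" using zh_ne_a by auto
  show ?thesis unfolding bp_pmf e1 e2 using e3 by (auto simp: mh_def)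
qed

lemma bp_inj_support: "set_pmf (bp (H a) (H \<circ> zh)) \<subseteq> H ` insert a S"
  using bp_support[of "H a" "H \<circ> zh"] by auto

lemma bp_inj_ext_int:
  fixes H :: "'a \<Rightarrow> 'b::t1_space"
  assumes inj: "inj_on H (insert a S)" and f: "\<And>x. x \<in> insert a S \<Longrightarrow> f (H x) \<noteq> -\<infinity>"
  shows "ext_int (DM (bp (H a) (H \<circ> zh))) f = ereal \<epsilon> * f (H a) + (\<Sum>x\<in>S. ereal ((1 - \<epsilon>) * mh x) * f (H x))"
proof -
  have "ext_int (DM (bp (H a) (H \<circ> zh))) f = (\<Sum>y\<in>H ` insert a S. ereal (pmf (bp (H a) (H \<circ> zh)) y) * f y)"
    by (rule DM_ext_int[OF _ bp_inj_support]) (use f in auto)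
  also have "\<dots> = (\<Sum>x\<in>insert a S. ereal (pmf (bp (H a) (H \<circ> zh)) (H x)) * f (H x))"
    by (subst sum.reindex[OF inj]) simp
  also have "\<dots> = (\<Sum>x\<in>insert a S. ereal (if x = a then \<epsilon> else (1 - \<epsilon>) * mh x) * f (H x))"
    by (intro sum.cong refl) (simp add: bp_inj_pmf[OF inj])
  also have "\<dots> = ereal \<epsilon> * f (H a) + (\<Sum>x\<in>S. ereal (if x = a then \<epsilon> else (1 - \<epsilon>) * mh x) * f (H x))"
    using a_notin by (subst sum.insert) auto
  also have "(\<Sum>x\<in>S. ereal (if x = a then \<epsilon> else (1 - \<epsilon>) * mh x) * f (H x)) = (\<Sum>x\<in>S. ereal ((1 - \<epsilon>) * mh x) * f (H x))"
    (is "sum ?lhs _ = sum ?rhs _")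
  proof (rule sum.cong[OF refl])
    fix x assume "x \<in> S" then have "x \<noteq> a" using a_notin by metis
    then show "?lhs x = ?rhs x" by simp
  qed
  finally show ?thesis .
qed

lemma bp_inj_nn:
  fixes H :: "'a \<Rightarrow> 'b::t1_space"
  assumes inj: "inj_on H (insert a S)" and h: "h \<in> borel_measurable borel"
  shows "(\<integral>\<^sup>+ y. h y \<partial>DM (bp (H a) (H \<circ> zh))) = ennreal \<epsilon> * h (H a) + (\<Sum>x\<in>S. ennreal ((1 - \<epsilon>) * mh x) * h (H x))"
proof -
  have h': "h \<in> borel_measurable (distr (measure_pmf (bp (H a) (H \<circ> zh))) borel (\<lambda>x. x))"
    using h by (simp add: measurable_cong_sets[OF sets_distr refl])
  have "(\<integral>\<^sup>+ y. h y \<partial>DM (bp (H a) (H \<circ> zh))) = (\<integral>\<^sup>+ y. h y \<partial>measure_pmf (bp (H a) (H \<circ> zh)))"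
    unfolding DM_def by (subst nn_integral_distr[OF _ h']) auto
  also have "\<dots> = (\<Sum>y\<in>H ` insert a S. h y * ennreal (pmf (bp (H a) (H \<circ> zh)) y))"
    by (rule nn_integral_measure_pmf_support) (auto dest: subsetD[OF bp_inj_support[of H]])
  also have "\<dots> = (\<Sum>x\<in>insert a S. h (H x) * ennreal (pmf (bp (H a) (H \<circ> zh)) (H x)))"
    by (subst sum.reindex[OF inj]) simp
  also have "\<dots> = (\<Sum>x\<in>insert a S. ennreal (if x = a then \<epsilon> else (1 - \<epsilon>) * mh x) * h (H x))"
    by (intro sum.cong refl) (simp add: bp_inj_pmf[OF inj] mult.commute)
  also have "\<dots> = ennreal \<epsilon> * h (H a) + (\<Sum>x\<in>S. ennreal (if x = a then \<epsilon> else (1 - \<epsilon>) * mh x) * h (H x))"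
    using a_notin by (subst sum.insert) auto
  also have "(\<Sum>x\<in>S. ennreal (if x = a then \<epsilon> else (1 - \<epsilon>) * mh x) * h (H x)) = (\<Sum>x\<in>S. ennreal ((1 - \<epsilon>) * mh x) * h (H x))"
    (is "sum ?lhs _ = sum ?rhs _")
  proof (rule sum.cong[OF refl])
    fix x assume "x \<in> S" then have "x \<noteq> a" using a_notin by metis
    then show "?lhs x = ?rhs x" by simp
  qed
  finally show ?thesis .
qed

end

lemma ereal_cancel: "0 < k \<Longrightarrow> ereal (k * m) * (X / ereal k) = ereal m * X"
  by (cases X) (auto simp: field_simps zero_less_mult_iff)

context setting
begin

lemma bp_cong: "(\<And>i. i \<in> {1..n} \<Longrightarrow> g i = g' i) \<Longrightarrow> bp pA g = bp pA g'"
  unfolding bp_def using n by (intro bind_pmf_cong refl) (auto intro!: pmf.map_cong)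

lemma nu_hat_eq: "nu_hat n zh \<epsilon> = DM (bp (a, 0) (\<lambda>i. (zh i, 1 / (1 - \<epsilon>))))"
  unfolding nu_hat_def DM_def bp_def ..

lemma Zclosed: "closed Z" using Zc by (rule compact_imp_closed)

lemma mu_AE_Z:
  assumes "prob_space \<mu>" "sets \<mu> = sets borel" "emeasure \<mu> Z = 1"
  shows "AE x in \<mu>. x \<in> Z"
proof -
  interpret prob_space \<mu> by fact
  have Zs: "Z \<in> sets \<mu>" using assms(2) Zclosed by simp
  then show ?thesis using AE_in_set_eq_1[OF Zs] assms(3) by (simp add: emeasure_eq_measure)
qed

lemma dir_ge:
  assumes mu: "prob_space \<mu>" "sets \<mu> = sets borel" "emeasure \<mu> Z = 1" "phi_div \<phi> \<mu> muh \<le> ereal r"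
  shows "\<exists>\<nu>. (prob_space \<nu> \<and> sets \<nu> = sets borel \<and> emeasure \<nu> (Z \<times> {0..}) = 1 \<and>
             OT_disc (cost_ot \<phi> n zh \<epsilon>) \<nu> (nu_hat n zh \<epsilon>) \<le> ereal r) \<and>
          ext_int \<mu> (\<lambda>z. ereal (ell z)) \<le> ext_int \<nu> (\<lambda>(v, w). ereal (ell v * w))"
proof -
  interpret mu: prob_space \<mu> by fact
  have smu: "space \<mu> = UNIV" using sets_eq_imp_space_eq[OF mu(2)] by simp
  define mx where "mx x = measure \<mu> {x}" for x
  define ms where "ms = measure \<mu> (UNIV - S)"
  define w where "w x = (if x \<in> S then mx x / ((1 - \<epsilon>) * mh x) else ms / \<epsilon>)" for x
  define hw where "hw x = (if x \<in> S then 1 / (1 - \<epsilon>) else 0)" for x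
  define H where "H x = ((x, w x), (x, hw x))" for x
  define H1 where "H1 x = (x, w x)" for x
  define P where "P = bp (H a) (H \<circ> zh)"
  define \<nu> where "\<nu> = DM (bp (H1 a) (H1 \<circ> zh))"
  define \<pi> where "\<pi> = DM P"
  have injH: "inj_on H (insert a S)" unfolding H_def inj_on_def by auto
  have injH1: "inj_on H1 (insert a S)" unfolding H1_def inj_on_def by auto
  have eps1: "0 < 1 - \<epsilon>" using eps by simp
  have wpos: "w x \<ge> 0" for x
    unfolding w_def mx_def ms_def using eps mh_pos by (auto intro!: divide_nonneg_pos)
  have mapfst: "map_pmf fst P = bp (H1 a) (H1 \<circ> zh)"
    unfolding P_def bp_map by (simp add: H_def H1_def comp_def)
  have mapsnd: "map_pmf snd P = bp (a, 0) (\<lambda>i. (zh i, 1 / (1 - \<epsilon>)))"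
  proof -
    have "snd (H a) = (a, 0)" using a_notin by (simp add: H_def hw_def)
    then show ?thesis unfolding P_def bp_map by (auto intro!: bp_cong simp: H_def hw_def)
  qed
  have fstm: "fst \<in> borel_measurable (borel :: (('a \<times> real) \<times> ('a \<times> real)) measure)"
    by (intro borel_measurable_continuous_onI continuous_intros)
  have sndm: "snd \<in> borel_measurable (borel :: (('a \<times> real) \<times> ('a \<times> real)) measure)"
    by (intro borel_measurable_continuous_onI continuous_intros)
  have marg1: "distr \<pi> borel fst = \<nu>" unfolding \<pi>_def \<nu>_def DM_distr[OF fstm] mapfst ..
  have marg2: "distr \<pi> borel snd = nu_hat n zh \<epsilon>" unfolding \<pi>_def nu_hat_eq DM_distr[OF sndm] mapsnd ..
  have sumS: "(\<Sum>x\<in>S. mx x) = measure \<mu> S"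
    unfolding mx_def using mu(2) singleton_borel
    by (intro finite_measure.finite_measure_eq_sum_singleton[symmetric]) (auto simp: mu.finite_measure_axioms)
  have compl: "ms = 1 - measure \<mu> S"
    unfolding ms_def using mu.prob_compl[of S] smu mu(2) finite_borel[of S] by simp
  have hm0: "(\<lambda>x. snd (fst x)) \<in> borel_measurable (borel :: (('a \<times> real) \<times> ('a \<times> real)) measure)"
    by (intro borel_measurable_continuous_onI continuous_intros)
  have hm: "(\<lambda>x. ennreal (snd (fst x))) \<in> borel_measurable (borel :: (('a \<times> real) \<times> ('a \<times> real)) measure)"
    using measurable_compose[OF hm0 measurable_ennreal] by simp
  have W: "(\<integral>\<^sup>+ x. ennreal (snd (fst x)) \<partial>\<pi>) = 1"
  proof -
    have "(\<integral>\<^sup>+ x. ennreal (snd (fst x)) \<partial>\<pi>) = ennreal \<epsilon> * ennreal (w a) + (\<Sum>x\<in>S. ennreal ((1 - \<epsilon>) * mh x) * ennreal (w x))"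
      unfolding \<pi>_def P_def by (subst bp_inj_nn[OF injH hm]) (simp add: H_def)
    also have "\<dots> = ennreal ms + (\<Sum>x\<in>S. ennreal (mx x))"
    proof -
      have "ennreal \<epsilon> * ennreal (w a) = ennreal ms"
        using eps a_notin wpos[of a] by (simp add: ennreal_mult[symmetric] w_def)
      moreover have "ennreal ((1 - \<epsilon>) * mh x) * ennreal (w x) = ennreal (mx x)" if "x \<in> S" for x
        using that eps1 mh_pos[OF that] wpos[of x]
        by (simp add: ennreal_mult[symmetric] w_def mh_nonneg)
      ultimately show ?thesis by simp
    qed
    also have "\<dots> = ennreal (ms + (\<Sum>x\<in>S. mx x))"
      by (subst ennreal_plus) (auto simp: sum_ennreal mx_def ms_def intro!: sum_nonneg)
    also have "ms + (\<Sum>x\<in>S. mx x) = 1" using sumS compl by simp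
    finally show ?thesis by simp
  qed
  have cost_H: "cost_ot \<phi> n zh \<epsilon> (fst (H x)) (snd (H x)) =
      (if x \<in> S then \<phi> (mx x / mh x) / ereal (1 - \<epsilon>) else cinf * ereal (ms / \<epsilon>))" if "x \<in> insert a S" for x
  proof (cases "x \<in> S")
    case True
    have "(1 - \<epsilon>) * w x = mx x / mh x" using True eps1 unfolding w_def by simp
    then show ?thesis using True unfolding cost_ot_def H_def Let_def by (simp add: phi_conv_eq[OF ef])
  next
    case False
    then have "x = a" using that by simp
    then show ?thesis using False unfolding cost_ot_def H_def Let_def w_def by simp
  qed
  have cost_nm: "cost_ot \<phi> n zh \<epsilon> (fst (H x)) (snd (H x)) \<noteq> -\<infinity>" if "x \<in> insert a S" for x
  proof (cases "x \<in> S")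
    case True
    then show ?thesis unfolding cost_H[OF that] using ef_not_minf[OF ef] eps1
      by (cases "\<phi> (mx x / mh x)") auto
  next
    case False
    have "ms / \<epsilon> \<ge> 0" unfolding ms_def using eps by simp
    then show ?thesis unfolding cost_H[OF that] using False phi_inf_nminf[OF ef]
      by (cases cinf) (auto simp: not_le)
  qed
  have cost: "ext_int \<pi> (\<lambda>x. cost_ot \<phi> n zh \<epsilon> (fst x) (snd x)) = phi_div \<phi> \<mu> muh"
  proof -
    have "ext_int \<pi> (\<lambda>x. cost_ot \<phi> n zh \<epsilon> (fst x) (snd x))
        = ereal \<epsilon> * cost_ot \<phi> n zh \<epsilon> (fst (H a)) (snd (H a)) + (\<Sum>x\<in>S. ereal ((1 - \<epsilon>) * mh x) * cost_ot \<phi> n zh \<epsilon> (fst (H x)) (snd (H x)))"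
      unfolding \<pi>_def P_def by (rule bp_inj_ext_int[OF injH], rule cost_nm)
    also have "ereal \<epsilon> * cost_ot \<phi> n zh \<epsilon> (fst (H a)) (snd (H a)) = ereal ms * cinf"
    proof -
      have c: "cost_ot \<phi> n zh \<epsilon> (fst (H a)) (snd (H a)) = cinf * ereal (ms / \<epsilon>)"
        using cost_H[of a] a_notin by simp
      have e: "ereal \<epsilon> * ereal (ms / \<epsilon>) = ereal ms" using eps by simp
      have "ereal \<epsilon> * (cinf * ereal (ms / \<epsilon>)) = (ereal \<epsilon> * ereal (ms / \<epsilon>)) * cinf"
        by (metis mult.assoc mult.commute)
      then show ?thesis unfolding c e .
    qed
    also have "(\<Sum>x\<in>S. ereal ((1 - \<epsilon>) * mh x) * cost_ot \<phi> n zh \<epsilon> (fst (H x)) (snd (H x)))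
        = (\<Sum>x\<in>S. ereal (mh x) * \<phi> (measure \<mu> {x} / mh x))"
    proof (rule sum.cong[OF refl])
      fix x assume x: "x \<in> S"
      show "ereal ((1 - \<epsilon>) * mh x) * cost_ot \<phi> n zh \<epsilon> (fst (H x)) (snd (H x)) = ereal (mh x) * \<phi> (measure \<mu> {x} / mh x)"
        using cost_H[of x] x ereal_cancel[OF eps1] by (simp add: mx_def)
    qed
    finally show ?thesis unfolding D_formula[OF mu(1,2)] ms_def by (simp add: add.commute)
  qed
  have pi_in: "\<pi> \<in> {\<pi> :: (('a \<times> real) \<times> ('a \<times> real)) measure.
                  prob_space \<pi> \<and> sets \<pi> = sets borel \<and>
                  distr \<pi> borel fst = \<nu> \<and> distr \<pi> borel snd = nu_hat n zh \<epsilon> \<and>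
                  (\<integral>\<^sup>+ x. ennreal (snd (fst x)) \<partial>\<pi>) = 1}"
    using marg1 marg2 W DM_prob unfolding \<pi>_def by auto
  have OT: "OT_disc (cost_ot \<phi> n zh \<epsilon>) \<nu> (nu_hat n zh \<epsilon>) \<le> ereal r"
    unfolding OT_disc_def using INF_lower[OF pi_in, of "\<lambda>\<pi>. ext_int \<pi> (\<lambda>x. cost_ot \<phi> n zh \<epsilon> (fst x) (snd x))"]
      cost mu(4) by simp
  have ZW: "Z \<times> {0..} \<in> sets (borel :: ('a \<times> real) measure)"
    using Zclosed by (intro borel_closed closed_Times) auto
  have nuZ: "emeasure \<nu> (Z \<times> {0..}) = 1"
  proof -
    have "AE x in measure_pmf (bp (H1 a) (H1 \<circ> zh)). x \<in> Z \<times> {0..}"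
      using AE_measure_pmf
    proof (rule eventually_mono)
      fix x assume "x \<in> set_pmf (bp (H1 a) (H1 \<circ> zh))"
      then have "x \<in> H1 ` insert a S" by (rule subsetD[OF bp_inj_support])
      then obtain z where "z \<in> insert a S" "x = H1 z" by (rule imageE) auto
      then show "x \<in> Z \<times> {0..}" using wpos zhZ aZ by (auto simp: H1_def)
    qed
    then have "emeasure (measure_pmf (bp (H1 a) (H1 \<circ> zh))) (Z \<times> {0..}) = 1"
      by (intro measure_pmf.emeasure_eq_1_AE) auto
    then show ?thesis unfolding \<nu>_def using DM_emeasure[OF ZW] by simp
  qed
  have val_nu: "ext_int \<nu> (\<lambda>(v, w). ereal (ell v * w)) = ereal (ell a * ms + (\<Sum>x\<in>S. ell x * mx x))"
  proof -
    have "ext_int \<nu> (\<lambda>(v, w). ereal (ell v * w)) = ereal \<epsilon> * ereal (ell a * w a) + (\<Sum>x\<in>S. ereal ((1 - \<epsilon>) * mh x) * ereal (ell x * w x))"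
      unfolding \<nu>_def by (subst bp_inj_ext_int[OF injH1]) (auto simp: H1_def)
    also have "\<dots> = ereal (\<epsilon> * (ell a * w a) + (\<Sum>x\<in>S. (1 - \<epsilon>) * mh x * (ell x * w x)))"
      by (simp add: sum_ereal)
    also have "\<epsilon> * (ell a * w a) = ell a * ms" using a_notin eps unfolding w_def by simp
    also have "(\<Sum>x\<in>S. (1 - \<epsilon>) * mh x * (ell x * w x)) = (\<Sum>x\<in>S. ell x * mx x)"
    proof (rule sum.cong[OF refl])
      fix x assume x: "x \<in> S"
      show "(1 - \<epsilon>) * mh x * (ell x * w x) = ell x * mx x"
        using x eps1 mh_pos[OF x] unfolding w_def by (simp add: field_simps)
    qed
    finally show ?thesis .
  qed
  have val_mu: "ext_int \<mu> (\<lambda>z. ereal (ell z)) \<le> ereal (ell a * ms + (\<Sum>x\<in>S. ell x * mx x))"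
  proof -
    have "ext_int \<mu> (\<lambda>z. ereal (ell z)) \<le> ext_int \<mu> (\<lambda>z. if z \<in> S then ereal (ell z) else ereal (ell a))"
      using mu_AE_Z[OF mu(1-3)]
      by (intro ext_int_mono_AE) (auto elim!: eventually_mono simp: amax)
    also have "\<dots> = (\<Sum>x\<in>S. ereal (measure \<mu> {x}) * ereal (ell x)) + ereal (measure \<mu> (space \<mu> - S)) * ereal (ell a)"
      by (rule ext_int_piecewise) (use mu.finite_measure_axioms smu mu(2) singleton_borel in auto)
    also have "\<dots> = ereal (ell a * ms + (\<Sum>x\<in>S. ell x * mx x))"
      by (simp add: sum_ereal smu ms_def mx_def mult.commute)
    finally show ?thesis .
  qed
  show ?thesis
    using DM_prob[of "bp (H1 a) (H1 \<circ> zh)"] nuZ OT val_nu val_mu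
    by (intro exI[of _ \<nu>]) (auto simp: \<nu>_def)
qed

end

lemma ext_int_pinf:
  assumes B: "B \<in> sets M" "emeasure M B > 0" and f: "\<And>y. y \<in> B \<Longrightarrow> f y = \<infinity>"
  shows "ext_int M f = \<infinity>"
proof -
  have "\<top> * emeasure M B \<le> (\<integral>\<^sup>+ y. e2ennreal (f y) \<partial>M)"
    unfolding nn_integral_cmult_indicator[OF B(1), symmetric]
    by (intro nn_integral_mono) (auto simp: indicator_def f)
  then have "(\<integral>\<^sup>+ y. e2ennreal (f y) \<partial>M) = \<top>" using B(2) by (auto simp: ennreal_top_mult top_unique split: if_splits)
  then show ?thesis unfolding ext_int_def by simp
qed

lemma e2_mult: "0 < c \<Longrightarrow> e2ennreal (x * ereal c) = e2ennreal x * ennreal c"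
proof -
  assume c: "0 < c"
  have "enn2ereal (e2ennreal (x * ereal c)) = enn2ereal (e2ennreal x * ennreal c)"
    unfolding e2_pos times_ennreal.rep_eq using c
    by (cases x) (auto simp: enn2ereal_ennreal max_def zero_le_mult_iff mult_le_0_iff)
  then show ?thesis by (metis enn2ereal_inverse e2ennreal_enn2ereal)
qed

lemma ext_int_cmult:
  assumes c: "0 < c" and fm: "f \<in> borel_measurable M"
  shows "ext_int M (\<lambda>y. f y * ereal c) = ext_int M f * ereal c"
proof -
  have m1: "(\<lambda>y. e2ennreal (f y)) \<in> borel_measurable M" using measurable_compose[OF fm measurable_e2ennreal] by simp
  have m2: "(\<lambda>y. e2ennreal (- f y)) \<in> borel_measurable M"
    using measurable_compose[OF borel_measurable_uminus_ereal[OF fm] measurable_e2ennreal] by simp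
  have p: "(\<integral>\<^sup>+ y. e2ennreal (f y * ereal c) \<partial>M) = (\<integral>\<^sup>+ y. e2ennreal (f y) \<partial>M) * ennreal c"
    using c by (simp add: e2_mult nn_integral_multc[OF m1])
  have n: "(\<integral>\<^sup>+ y. e2ennreal (- (f y * ereal c)) \<partial>M) = (\<integral>\<^sup>+ y. e2ennreal (- f y) \<partial>M) * ennreal c"
  proof -
    have "(\<integral>\<^sup>+ y. e2ennreal (- (f y * ereal c)) \<partial>M) = (\<integral>\<^sup>+ y. e2ennreal ((- f y) * ereal c) \<partial>M)" by simp
    also have "\<dots> = (\<integral>\<^sup>+ y. e2ennreal (- f y) * ennreal c \<partial>M)" by (intro nn_integral_cong) (rule e2_mult[OF c])
    also have "\<dots> = (\<integral>\<^sup>+ y. e2ennreal (- f y) \<partial>M) * ennreal c" by (rule nn_integral_multc[OF m2])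
    finally show ?thesis .
  qed
  have e: "x * ereal c - y * ereal c = (x - y) * ereal c" if "0 \<le> x" "0 \<le> y" for x y :: ereal
    using that c by (cases x; cases y) (auto simp: algebra_simps)
  show ?thesis unfolding ext_int_def p n times_ennreal.rep_eq using c
    by (simp add: enn2ereal_ennreal e enn2ereal_nonneg)
qed

lemma jensen:
  fixes \<phi> :: "real \<Rightarrow> ereal"
  assumes ef: "entropy_function \<phi>" and M: "finite_measure M" and A: "A \<in> sets M"
    and k: "measure M A > 0" and X: "X \<in> borel_measurable M"
    and Xi: "integrable M (\<lambda>y. X y * indicator A y)"
  shows "ereal (measure M A) * \<phi> ((\<integral> y. X y * indicator A y \<partial>M) / measure M A)
     \<le> ext_int M (\<lambda>y. if y \<in> A then \<phi> (X y) else 0)"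
proof -
  interpret finite_measure M by fact
  define k where "k = measure M A"
  define m where "m = (\<integral> y. X y * indicator A y \<partial>M) / k"
  have kpos: "k > 0" using k unfolding k_def .
  have intX: "(\<integral> y. X y * indicator A y \<partial>M) = k * m" unfolding m_def using kpos by simp
  have indi: "integrable M (indicator A :: _ \<Rightarrow> real)"
    using A by (simp add: integrable_indicator_iff emeasure_eq_measure)
  have intA: "(\<integral> y. indicator A y \<partial>M) = k" unfolding k_def using A by simp
  show ?thesis
    unfolding k_def[symmetric] m_def[symmetric]
  proof (cases "(\<exists>t1<m. \<phi> t1 < \<infinity>) \<and> (\<exists>t2>m. \<phi> t2 < \<infinity>)")
    case True
    then obtain t1 t2 where t: "t1 < m" "\<phi> t1 < \<infinity>" "m < t2" "\<phi> t2 < \<infinity>" by auto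
    obtain s where s: "\<forall>t. ereal (\<psi> \<phi> m + s * (t - m)) \<le> \<phi> t"
      using subgrad(2)[OF ef t(2,4,1,3)] by auto
    have phim: "\<phi> m = ereal (\<psi> \<phi> m)"
      using ef_real[OF ef subgrad(1)[OF ef t(2,4,1,3)]] by (simp add: \<psi>_def[OF ef])
    define g where "g y = (\<psi> \<phi> m + s * (X y - m)) * indicator A y" for y
    have gi: "integrable M g"
    proof -
      have "g = (\<lambda>y. (\<psi> \<phi> m - s * m) * indicator A y + s * (X y * indicator A y))"
        unfolding g_def by (auto simp: fun_eq_iff indicator_def algebra_simps)
      then show ?thesis using indi Xi by simp
    qed
    have intg: "(\<integral> y. g y \<partial>M) = k * \<psi> \<phi> m"
    proof -
      have "g = (\<lambda>y. (\<psi> \<phi> m - s * m) * indicator A y + s * (X y * indicator A y))"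
        unfolding g_def by (auto simp: fun_eq_iff indicator_def algebra_simps)
      then have "(\<integral> y. g y \<partial>M) = (\<psi> \<phi> m - s * m) * k + s * (k * m)"
        using indi Xi intA intX by simp
      then show ?thesis by (simp add: algebra_simps)
    qed
    have "ereal k * \<phi> m = ext_int M (\<lambda>y. ereal (g y))"
      using ext_int_real[OF gi] intg phim by simp
    also have "\<dots> \<le> ext_int M (\<lambda>y. if y \<in> A then \<phi> (X y) else 0)"
      by (intro ext_int_mono_AE AE_I2) (use s in \<open>auto simp: g_def\<close>)
    finally show "ereal k * \<phi> m \<le> ext_int M (\<lambda>y. if y \<in> A then \<phi> (X y) else 0)" .
  next
    case False
    have XAm: "{y \<in> space M. y \<in> A \<and> X y \<noteq> m} \<in> sets M" using A X by measurable
    \<comment> \<open>either X = m a.e. on A, or the right hand side is infinite\<close>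
    show "ereal k * \<phi> m \<le> ext_int M (\<lambda>y. if y \<in> A then \<phi> (X y) else 0)"
    proof (cases "AE y in M. y \<in> A \<longrightarrow> X y = m")
      case True
      have "ext_int M (\<lambda>y. if y \<in> A then \<phi> (X y) else 0) = ext_int M (\<lambda>y. if y \<in> A then \<phi> m else 0)"
        using True by (intro ext_int_cong_AE) (auto elim!: eventually_mono)
      also have "\<dots> = ereal k * \<phi> m"
        unfolding k_def using A ef_not_minf[OF ef] by (intro ext_int_const_on) auto
      finally show ?thesis by simp
    next
      case nAE: False
      define B where "B = {y \<in> space M. y \<in> A \<and> X y \<noteq> m}"
      have Bs: "B \<in> sets M" unfolding B_def by (rule XAm)
      have Bpos: "emeasure M B > 0"
      proof (rule ccontr)
        assume "\<not> emeasure M B > 0"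
        then have "emeasure M B = 0" by (simp add: not_gr_zero)
        then have "AE y in M. y \<notin> B" using Bs AE_not_in[of B M] by (simp add: null_sets_def)
        then have "AE y in M. y \<in> A \<longrightarrow> X y = m" using AE_space by eventually_elim (auto simp: B_def)
        with nAE show False by simp
      qed
      from False have side: "(\<forall>t<m. \<phi> t = \<infinity>) \<or> (\<forall>t>m. \<phi> t = \<infinity>)"
        by (auto simp: less_top)
      show ?thesis
      proof (cases "AE y in M. y \<in> A \<longrightarrow> \<phi> (X y) < \<infinity>")
        case False
        define B' where "B' = {y \<in> space M. y \<in> A \<and> \<phi> (X y) = \<infinity>}"
        have B's: "B' \<in> sets M" unfolding B'_def using A X ef_measurable[OF ef] by measurable
        have "emeasure M B' > 0"
        proof (rule ccontr)
          assume "\<not> emeasure M B' > 0"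
          then have "emeasure M B' = 0" by (simp add: not_gr_zero)
          then have "AE y in M. y \<notin> B'" using B's AE_not_in[of B' M] by (simp add: null_sets_def)
          then have "AE y in M. y \<in> A \<longrightarrow> \<phi> (X y) < \<infinity>" using AE_space by eventually_elim (auto simp: B'_def less_top)
          with False show False by simp
        qed
        then have "ext_int M (\<lambda>y. if y \<in> A then \<phi> (X y) else 0) = \<infinity>"
          using B's by (intro ext_int_pinf[of B']) (auto simp: B'_def)
        then show ?thesis by simp
      next
        case fin: True
        \<comment> \<open>X lies on one side of m a.e. on A, with mean m, so X = m a.e. on A: contradiction\<close>
        have "AE y in M. y \<in> A \<longrightarrow> X y = m"
        proof -
          { assume L: "\<forall>t>m. \<phi> t = \<infinity>"
            have le: "AE y in M. y \<in> A \<longrightarrow> X y \<le> m"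
              using fin by (rule eventually_mono) (use L in \<open>auto simp: not_le[symmetric]\<close>)
            define f where "f y = (m - X y) * indicator A y" for y
            have fi: "integrable M f"
            proof -
              have "f = (\<lambda>y. m * indicator A y - X y * indicator A y)" unfolding f_def by (auto simp: fun_eq_iff algebra_simps)
              then show ?thesis using indi Xi by simp
            qed
            have "(\<integral> y. f y \<partial>M) = 0"
            proof -
              have "f = (\<lambda>y. m * indicator A y - X y * indicator A y)" unfolding f_def by (auto simp: fun_eq_iff algebra_simps)
              then show ?thesis using indi Xi intA intX by (simp add: algebra_simps)
            qed
            moreover have "AE y in M. 0 \<le> f y" using le by (rule eventually_mono) (auto simp: f_def indicator_def)
            ultimately have "AE y in M. f y = 0" using integral_nonneg_eq_0_iff_AE[OF fi] by simp
            then have "AE y in M. y \<in> A \<longrightarrow> X y = m" by (rule eventually_mono) (auto simp: f_def)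
          }
          moreover
          { assume L: "\<forall>t<m. \<phi> t = \<infinity>"
            have ge: "AE y in M. y \<in> A \<longrightarrow> X y \<ge> m"
              using fin by (rule eventually_mono) (use L in \<open>auto simp: not_le[symmetric]\<close>)
            define f where "f y = (X y - m) * indicator A y" for y
            have feq: "f = (\<lambda>y. X y * indicator A y - m * indicator A y)" unfolding f_def by (auto simp: fun_eq_iff algebra_simps)
            have fi: "integrable M f" using feq indi Xi by simp
            have "(\<integral> y. f y \<partial>M) = 0" using feq indi Xi intA intX by (simp add: algebra_simps)
            moreover have "AE y in M. 0 \<le> f y" using ge by (rule eventually_mono) (auto simp: f_def indicator_def)
            ultimately have "AE y in M. f y = 0" using integral_nonneg_eq_0_iff_AE[OF fi] by simp
            then have "AE y in M. y \<in> A \<longrightarrow> X y = m" by (rule eventually_mono) (auto simp: f_def)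
          }
          ultimately show ?thesis using side by blast
        qed
        with nAE show ?thesis by simp
      qed
    qed
  qed
qed

context setting
begin

definition "c2 y = (if fst y \<in> S then \<phi> ((1 - \<epsilon>) * snd y) / ereal (1 - \<epsilon>)
    else if fst y = a then cinf * ereal (snd y) else \<infinity>)"

lemma cost_eq: "cost_ot \<phi> n zh \<epsilon> vw vwh = (if fst vw = fst vwh then c2 vw else \<infinity>)"
  unfolding cost_ot_def c2_def Let_def phi_conv_eq[OF ef] by auto

lemma c2_le_cost: "c2 vw \<le> cost_ot \<phi> n zh \<epsilon> vw vwh"
  unfolding cost_eq by auto

lemma cost_fin: "cost_ot \<phi> n zh \<epsilon> vw vwh \<noteq> \<infinity> \<Longrightarrow> fst vw = fst vwh \<and> fst vw \<in> insert a S"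
  unfolding cost_eq c2_def by (auto split: if_splits)

lemma phi_meas[measurable]: "\<phi> \<in> borel_measurable borel"
  by (rule ef_measurable[OF ef])

lemma closed_fst_fin: "finite F \<Longrightarrow> closed {y :: 'a \<times> real. fst y \<in> F}"
proof -
  assume "finite F"
  then have "closed (F \<times> (UNIV :: real set))" by (intro closed_Times) (auto intro: finite_imp_closed)
  moreover have "{y :: 'a \<times> real. fst y \<in> F} = F \<times> UNIV" by auto
  ultimately show ?thesis by simp
qed

lemma c2_meas: "c2 \<in> borel_measurable (borel :: ('a \<times> real) measure)"
proof -
  have s1: "{y \<in> space (borel :: ('a \<times> real) measure). fst y \<in> S} \<in> sets borel"
    using closed_fst_fin[OF finS] by simp
  have s2: "{y \<in> space (borel :: ('a \<times> real) measure). fst y = a} \<in> sets borel"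
    using closed_fst_fin[of "{a}"] by simp
  have m0: "(\<lambda>y::'a \<times> real. (1 - \<epsilon>) * snd y) \<in> borel_measurable borel"
    by (intro borel_measurable_continuous_onI continuous_intros)
  have m1: "(\<lambda>y::'a \<times> real. \<phi> ((1 - \<epsilon>) * snd y) / ereal (1 - \<epsilon>)) \<in> borel_measurable borel"
    using measurable_compose[OF m0 phi_meas] by measurable
  have sndm: "(\<lambda>y::'a \<times> real. snd y) \<in> borel_measurable borel"
    by (intro borel_measurable_continuous_onI continuous_intros)
  note sndm[measurable]
  have m2: "(\<lambda>y::'a \<times> real. cinf * ereal (snd y)) \<in> borel_measurable borel"
    by measurable
  show ?thesis unfolding c2_def
    by (intro measurable_If m1 m2 s1 s2 measurable_const) auto
qed

lemma cost_meas: "(\<lambda>x. cost_ot \<phi> n zh \<epsilon> (fst x) (snd x)) \<in> borel_measurable (borel :: (('a \<times> real) \<times> ('a \<times> real)) measure)"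
proof -
  have s: "{x \<in> space (borel :: (('a \<times> real) \<times> ('a \<times> real)) measure). fst (fst x) = fst (snd x)} \<in> sets borel"
  proof -
    have "closed {x :: ('a \<times> real) \<times> ('a \<times> real). fst (fst x) = fst (snd x)}"
      by (intro closed_Collect_eq continuous_intros)
    then show ?thesis by simp
  qed
  have fm: "fst \<in> borel_measurable (borel :: (('a \<times> real) \<times> ('a \<times> real)) measure)"
    by (intro borel_measurable_continuous_onI continuous_intros)
  have "(\<lambda>x. c2 (fst x)) \<in> borel_measurable (borel :: (('a \<times> real) \<times> ('a \<times> real)) measure)"
    using measurable_compose[OF fm c2_meas] by simp
  then show ?thesis unfolding cost_eq by (rule measurable_If[OF _ measurable_const s]) simp
qed

lemma nu_hat_inj: "nu_hat n zh \<epsilon> = DM (bp ((\<lambda>x. (x, if x \<in> S then 1 / (1 - \<epsilon>) else 0)) a)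
      ((\<lambda>x. (x, if x \<in> S then 1 / (1 - \<epsilon>) else 0)) \<circ> zh))"
  unfolding nu_hat_eq using a_notin by (auto intro!: arg_cong[where f=DM] bp_cong)

lemma nu_hat_fst: "x \<in> insert a S \<Longrightarrow> measure (nu_hat n zh \<epsilon>) {y. fst y = x} = (if x = a then \<epsilon> else (1 - \<epsilon>) * mh x)"
proof -
  assume x: "x \<in> insert a S"
  define H where "H x = (x, if x \<in> S then 1 / (1 - \<epsilon>) else 0)" for x
  define Q where "Q = bp (H a) (H \<circ> zh)"
  have inj: "inj_on H (insert a S)" unfolding H_def inj_on_def by auto
  have B: "{y. fst y = x} \<in> sets (borel :: ('a \<times> real) measure)" using closed_fst_fin[of "{x}"] by simp
  have "emeasure (nu_hat n zh \<epsilon>) {y. fst y = x} = emeasure (measure_pmf Q) {y. fst y = x}"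
    unfolding nu_hat_inj H_def[symmetric] Q_def[symmetric] by (rule DM_emeasure[OF B])
  also have "\<dots> = emeasure (measure_pmf Q) ({y. fst y = x} \<inter> set_pmf Q)" by (simp add: emeasure_Int_set_pmf)
  also have "{y. fst y = x} \<inter> set_pmf Q = {H x} \<inter> set_pmf Q"
  proof -
    have supp: "set_pmf Q \<subseteq> H ` insert a S" unfolding Q_def by (rule bp_inj_support)
    have "(fst y = x) = (y = H x)" if y: "y \<in> set_pmf Q" for y
    proof -
      obtain z where "y = H z" using supp y by blast
      then show ?thesis by (auto simp: H_def)
    qed
    then show ?thesis by auto
  qed
  also have "emeasure (measure_pmf Q) ({H x} \<inter> set_pmf Q) = ennreal (pmf Q (H x))"
    by (simp add: emeasure_Int_set_pmf emeasure_pmf_single)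
  also have "pmf Q (H x) = (if x = a then \<epsilon> else (1 - \<epsilon>) * mh x)"
    unfolding Q_def by (rule bp_inj_pmf[OF inj x])
  finally show ?thesis using eps mh_nonneg[of x] unfolding measure_def by simp
qed

end

context setting
begin

lemma nu_struct:
  assumes nu: "prob_space \<nu>" "sets \<nu> = sets borel"
    and OT: "OT_disc (cost_ot \<phi> n zh \<epsilon>) \<nu> (nu_hat n zh \<epsilon>) \<le> ereal r"
  shows "AE y in \<nu>. fst y \<in> insert a S"
    and "\<And>x. x \<in> insert a S \<Longrightarrow> measure \<nu> {y. fst y = x} = (if x = a then \<epsilon> else (1 - \<epsilon>) * mh x)"
    and "(\<integral>\<^sup>+ y. ennreal (snd y) \<partial>\<nu>) = 1"
    and "ext_int \<nu> c2 \<le> ereal r"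
proof -
  define costf where "costf x = cost_ot \<phi> n zh \<epsilon> (fst x) (snd x)" for x :: "('a \<times> real) \<times> ('a \<times> real)"
  define PP where "PP = {\<pi> :: (('a \<times> real) \<times> ('a \<times> real)) measure.
                  prob_space \<pi> \<and> sets \<pi> = sets borel \<and>
                  distr \<pi> borel fst = \<nu> \<and> distr \<pi> borel snd = nu_hat n zh \<epsilon> \<and>
                  (\<integral>\<^sup>+ x. ennreal (snd (fst x)) \<partial>\<pi>) = 1}"
  have OTeq: "OT_disc (cost_ot \<phi> n zh \<epsilon>) \<nu> (nu_hat n zh \<epsilon>) = (INF \<pi>\<in>PP. ext_int \<pi> costf)"
    unfolding OT_disc_def PP_def costf_def ..
  have fstm: "fst \<in> measurable \<pi> (borel :: ('a \<times> real) measure)" if "sets \<pi> = sets borel" for \<pi> :: "(('a \<times> real) \<times> ('a \<times> real)) measure"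
    using that by (simp add: measurable_cong_sets[OF that refl]) (intro borel_measurable_continuous_onI continuous_intros)
  have sndm: "snd \<in> measurable \<pi> (borel :: ('a \<times> real) measure)" if "sets \<pi> = sets borel" for \<pi> :: "(('a \<times> real) \<times> ('a \<times> real)) measure"
    using that by (simp add: measurable_cong_sets[OF that refl]) (intro borel_measurable_continuous_onI continuous_intros)
  have lower: "ext_int \<nu> c2 \<le> ext_int \<pi> costf" if "\<pi> \<in> PP" for \<pi>
  proof -
    have p: "sets \<pi> = sets borel" "distr \<pi> borel fst = \<nu>" using that unfolding PP_def by auto
    have "ext_int \<nu> c2 = ext_int \<pi> (\<lambda>x. c2 (fst x))"
      using ext_int_distr[OF fstm[OF p(1)] c2_meas] p(2) by simp
    also have "\<dots> \<le> ext_int \<pi> costf"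
      by (intro ext_int_mono_AE AE_I2) (simp add: costf_def c2_le_cost)
    finally show ?thesis .
  qed
  show "ext_int \<nu> c2 \<le> ereal r"
    using OT unfolding OTeq by (meson INF_greatest lower order_trans)
  have "(INF \<pi>\<in>PP. ext_int \<pi> costf) < \<infinity>" using OT unfolding OTeq
    by (rule le_less_trans) simp
  then obtain \<pi> where pi: "\<pi> \<in> PP" "ext_int \<pi> costf < \<infinity>" unfolding INF_less_iff by blast
  have p: "prob_space \<pi>" "sets \<pi> = sets borel" "distr \<pi> borel fst = \<nu>" "distr \<pi> borel snd = nu_hat n zh \<epsilon>"
    "(\<integral>\<^sup>+ x. ennreal (snd (fst x)) \<partial>\<pi>) = 1" using pi(1) unfolding PP_def by auto
  interpret pi: prob_space \<pi> by (rule p(1))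
  have spi: "space \<pi> = UNIV" using sets_eq_imp_space_eq[OF p(2)] by simp
  have cm: "(\<lambda>x. e2ennreal (costf x)) \<in> borel_measurable \<pi>"
    using measurable_compose[OF cost_meas measurable_e2ennreal] unfolding costf_def
    by (simp add: measurable_cong_sets[OF p(2) refl])
  have "(\<integral>\<^sup>+ x. e2ennreal (costf x) \<partial>\<pi>) \<noteq> \<infinity>"
  proof
    assume "(\<integral>\<^sup>+ x. e2ennreal (costf x) \<partial>\<pi>) = \<infinity>"
    then have "ext_int \<pi> costf = \<infinity>" unfolding ext_int_def by simp
    then show False using pi(2) by simp
  qed
  from nn_integral_PInf_AE[OF cm this] have "AE x in \<pi>. costf x \<noteq> \<infinity>"
    by (rule eventually_mono) (auto simp: e2ennreal_infty)
  then have diag: "AE x in \<pi>. fst (fst x) = fst (snd x) \<and> fst (fst x) \<in> insert a S"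
  proof (rule eventually_mono)
    fix x assume "costf x \<noteq> \<infinity>"
    then show "fst (fst x) = fst (snd x) \<and> fst (fst x) \<in> insert a S"
      using cost_fin[of "fst x" "snd x"] unfolding costf_def by blast
  qed
  show "AE y in \<nu>. fst y \<in> insert a S"
  proof -
    have "{y \<in> space (borel :: ('a \<times> real) measure). fst y \<in> insert a S} \<in> sets borel"
      using closed_fst_fin[of "insert a S"] by simp
    then show ?thesis unfolding p(3)[symmetric] using diag
      by (subst AE_distr_iff[OF fstm[OF p(2)]]) (auto elim!: eventually_mono)
  qed
  show "measure \<nu> {y. fst y = x} = (if x = a then \<epsilon> else (1 - \<epsilon>) * mh x)" if x: "x \<in> insert a S" for x
  proof -
    have B: "{y. fst y = x} \<in> sets (borel :: ('a \<times> real) measure)" using closed_fst_fin[of "{x}"] by simp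
    have B1: "{p \<in> space \<pi>. fst (fst p) = x} \<in> sets \<pi>"
    proof -
      have "closed {p :: ('a \<times> real) \<times> ('a \<times> real). fst (fst p) = x}" by (intro closed_Collect_eq continuous_intros)
      then show ?thesis using p(2) spi by simp
    qed
    have B2: "{p \<in> space \<pi>. fst (snd p) = x} \<in> sets \<pi>"
    proof -
      have "closed {p :: ('a \<times> real) \<times> ('a \<times> real). fst (snd p) = x}" by (intro closed_Collect_eq continuous_intros)
      then show ?thesis using p(2) spi by simp
    qed
    have "measure \<nu> {y. fst y = x} = measure \<pi> (fst -` {y. fst y = x} \<inter> space \<pi>)"
      unfolding p(3)[symmetric] by (rule measure_distr[OF fstm[OF p(2)] B])
    also have "fst -` {y. fst y = x} \<inter> space \<pi> = {p \<in> space \<pi>. fst (fst p) = x}" by auto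
    also have "measure \<pi> {p \<in> space \<pi>. fst (fst p) = x} = measure \<pi> {p \<in> space \<pi>. fst (snd p) = x}"
      using diag B1 B2 by (intro pi.finite_measure_eq_AE) (auto elim!: eventually_mono)
    also have "{p \<in> space \<pi>. fst (snd p) = x} = snd -` {y. fst y = x} \<inter> space \<pi>" by auto
    also have "measure \<pi> (snd -` {y. fst y = x} \<inter> space \<pi>) = measure (nu_hat n zh \<epsilon>) {y. fst y = x}"
      unfolding p(4)[symmetric] by (rule measure_distr[OF sndm[OF p(2)] B, symmetric])
    finally show ?thesis using nu_hat_fst[OF x] by simp
  qed
  show "(\<integral>\<^sup>+ y. ennreal (snd y) \<partial>\<nu>) = 1"
  proof -
    have hm: "(\<lambda>y::'a \<times> real. ennreal (snd y)) \<in> borel_measurable borel"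
    proof -
      have "(snd :: 'a \<times> real \<Rightarrow> real) \<in> borel_measurable borel"
        by (intro borel_measurable_continuous_onI continuous_intros)
      from measurable_compose[OF this measurable_ennreal] show ?thesis by (simp add: comp_def)
    qed
    have "(\<integral>\<^sup>+ y. ennreal (snd y) \<partial>\<nu>) = (\<integral>\<^sup>+ x. ennreal (snd (fst x)) \<partial>\<pi>)"
    proof -
      have hm': "(\<lambda>y::'a \<times> real. ennreal (snd y)) \<in> borel_measurable (distr \<pi> borel fst)"
        using hm by (simp add: measurable_cong_sets[OF sets_distr refl])
      show ?thesis unfolding p(3)[symmetric] by (rule nn_integral_distr[OF fstm[OF p(2)] hm'])
    qed
    then show ?thesis using p(5) by simp
  qed
qed

end

lemma ereal_neg_le: "ereal u \<le> X \<Longrightarrow> - X \<le> ereal (- u)"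
  by (metis ereal_minus_le_minus uminus_ereal.simps(1))

locale nu_setting = setting +
  fixes \<nu> :: "('a \<times> real) measure"
  assumes nu_prob: "prob_space \<nu>" and nu_sets: "sets \<nu> = sets borel"
    and nuZ: "emeasure \<nu> (Z \<times> {0..}) = 1"
    and nuOT: "OT_disc (cost_ot \<phi> n zh \<epsilon>) \<nu> (nu_hat n zh \<epsilon>) \<le> ereal r"
begin

interpretation nu: prob_space \<nu> by (rule nu_prob)

lemma snu: "space \<nu> = UNIV" using sets_eq_imp_space_eq[OF nu_sets] by simp

lemmas AEF = nu_struct(1)[OF nu_prob nu_sets nuOT]
lemmas mass = nu_struct(2)[OF nu_prob nu_sets nuOT]
lemmas W1 = nu_struct(3)[OF nu_prob nu_sets nuOT]
lemmas Cle = nu_struct(4)[OF nu_prob nu_sets nuOT]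

lemma ZW: "Z \<times> {0..} \<in> sets (borel :: ('a \<times> real) measure)"
  using Zclosed by (intro borel_closed closed_Times) auto

lemma AEZ: "AE y in \<nu>. y \<in> Z \<times> {0..}"
proof -
  have "Z \<times> {0..} \<in> sets \<nu>" using ZW nu_sets by simp
  then show ?thesis using nu.AE_in_set_eq_1 nuZ by (simp add: nu.emeasure_eq_measure)
qed

lemma AEW: "AE y in \<nu>. 0 \<le> snd y"
  using AEZ by (rule eventually_mono) auto

lemma sndm[measurable]: "snd \<in> borel_measurable \<nu>"
  by (simp add: measurable_cong_sets[OF nu_sets refl]) (intro borel_measurable_continuous_onI continuous_intros)

lemma fstm: "fst \<in> measurable \<nu> borel"
  by (simp add: measurable_cong_sets[OF nu_sets refl]) (intro borel_measurable_continuous_onI continuous_intros)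

lemma Wint: "integrable \<nu> snd"
  by (rule integrableI_nonneg[OF sndm AEW]) (use W1 in simp)

lemma Wone: "(\<integral> y. snd y \<partial>\<nu>) = 1"
proof -
  have "ennreal (\<integral> y. snd y \<partial>\<nu>) = 1" using nn_integral_eq_integral[OF Wint AEW] W1 by simp
  then show ?thesis using integral_nonneg_AE[OF AEW] by simp
qed

definition "Aset x = {y :: 'a \<times> real. fst y = x}"

lemma Am: "Aset x \<in> sets \<nu>"
  using closed_fst_fin[of "{x}"] nu_sets unfolding Aset_def by simp

lemma Wi: "integrable \<nu> (\<lambda>y. snd y * indicator (Aset x) y)"
  by (rule integrable_real_mult_indicator[OF Am Wint])

definition "mW x = (\<integral> y. snd y * indicator (Aset x) y \<partial>\<nu>)"

lemma mW_nonneg: "mW x \<ge> 0"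
  unfolding mW_def using AEW by (intro integral_nonneg_AE) (auto elim!: eventually_mono simp: indicator_def)

lemma neg_fin:
  assumes x: "x \<in> insert a S"
  shows "(\<integral>\<^sup>+ y. e2ennreal (- c2 y) * indicator (Aset x) y \<partial>\<nu>) \<noteq> \<top>"
proof -
  obtain \<alpha> \<beta> where ab: "\<And>t. ereal (\<alpha> + \<beta> * t) \<le> \<phi> t" using minorant[OF ef] by blast
  have eps1: "0 < 1 - \<epsilon>" using eps by simp
  define K1 where "K1 = \<bar>\<alpha>\<bar> / (1 - \<epsilon>)"
  define cab where "cab = \<bar>real_of_ereal cinf\<bar>"
  have cab0: "cab \<ge> 0" unfolding cab_def by (rule abs_ge_zero)
  define K2 where "K2 = \<bar>\<beta>\<bar> + cab"
  have K: "K1 \<ge> 0" "K2 \<ge> 0" unfolding K1_def K2_def using eps1 cab0 by auto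
  have pt: "e2ennreal (- c2 y) * indicator (Aset x) y \<le> ennreal (K1 + K2 * snd y)" if w: "0 \<le> snd y" for y
  proof (cases "y \<in> Aset x")
    case False then show ?thesis by simp
  next
    case True
    then have fy: "fst y = x" unfolding Aset_def by simp
    have "- c2 y \<le> ereal (K1 + K2 * snd y)"
    proof (cases "x \<in> S")
      case xS: True
      have "ereal (\<alpha> + \<beta> * ((1 - \<epsilon>) * snd y)) / ereal (1 - \<epsilon>) \<le> \<phi> ((1 - \<epsilon>) * snd y) / ereal (1 - \<epsilon>)"
        by (rule ereal_divide_right_mono[OF ab]) (use eps1 in simp)
      then have "ereal ((\<alpha> + \<beta> * ((1 - \<epsilon>) * snd y)) / (1 - \<epsilon>)) \<le> \<phi> ((1 - \<epsilon>) * snd y) / ereal (1 - \<epsilon>)"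
        using eps1 by simp
      then have "- c2 y \<le> ereal (- ((\<alpha> + \<beta> * ((1 - \<epsilon>) * snd y)) / (1 - \<epsilon>)))"
        unfolding c2_def using xS fy by (simp add: ereal_neg_le)
      also have "\<dots> \<le> ereal (K1 + K2 * snd y)"
      proof -
        have "- ((\<alpha> + \<beta> * ((1 - \<epsilon>) * snd y)) / (1 - \<epsilon>)) = - \<alpha> / (1 - \<epsilon>) - \<beta> * snd y"
          using eps1 by (simp add: field_simps)
        also have "\<dots> \<le> K1 + \<bar>\<beta>\<bar> * snd y"
        proof -
          have h1: "- \<alpha> / (1 - \<epsilon>) \<le> \<bar>\<alpha>\<bar> / (1 - \<epsilon>)" using eps1 by (intro divide_right_mono) auto
          have "(- \<beta>) * snd y \<le> \<bar>\<beta>\<bar> * snd y" by (intro mult_right_mono) (use w in auto)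
          then have h2: "- (\<beta> * snd y) \<le> \<bar>\<beta>\<bar> * snd y" by simp
          show ?thesis unfolding K1_def using h1 h2 by linarith
        qed
        also have "\<dots> \<le> K1 + K2 * snd y" unfolding K2_def using w cab0 by (simp add: mult_right_mono)
        finally show ?thesis by simp
      qed
      finally show ?thesis .
    next
      case xS: False
      then have xa: "x = a" using x by simp
      have c: "c2 y = cinf * ereal (snd y)" unfolding c2_def using xS fy xa by simp
      show ?thesis
      proof (cases cinf)
        case (real c0)
        have "(- c0) * snd y \<le> (\<bar>\<beta>\<bar> + \<bar>c0\<bar>) * snd y" by (intro mult_right_mono) (use w in auto)
        then have "- (c0 * snd y) \<le> K2 * snd y"
          unfolding K2_def cab_def real by simp
        then show ?thesis unfolding c real using K by simp
      next
        case PInf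
        have "0 \<le> c2 y" unfolding c PInf using w by (cases "snd y = 0") auto
        then have "- c2 y \<le> 0" by simp
        also have "0 \<le> ereal (K1 + K2 * snd y)" using K w by simp
        finally show ?thesis .
      next
        case MInf then show ?thesis using phi_inf_nminf[OF ef] by simp
      qed
    qed
    then have "e2ennreal (- c2 y) \<le> e2ennreal (ereal (K1 + K2 * snd y))" by (rule e2ennreal_mono)
    then show ?thesis using True by (simp add: e2ennreal_ereal)
  qed
  have "(\<integral>\<^sup>+ y. e2ennreal (- c2 y) * indicator (Aset x) y \<partial>\<nu>) \<le> (\<integral>\<^sup>+ y. ennreal (K1 + K2 * snd y) \<partial>\<nu>)"
    using AEW by (intro nn_integral_mono_AE) (auto elim!: eventually_mono intro: pt)
  also have "\<dots> < \<top>"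
  proof -
    have "integrable \<nu> (\<lambda>y. K1 + K2 * snd y)" using Wint by simp
    from integrableD(2)[OF this] show ?thesis by (simp add: top.not_eq_extremum)
  qed
  finally show ?thesis by simp
qed

end

context nu_setting
begin

interpretation nu: prob_space \<nu> by (rule nu_prob)

lemma eps1: "0 < 1 - \<epsilon>" using eps by simp

lemma mass_S: assumes x: "x \<in> S" shows "measure \<nu> (Aset x) = (1 - \<epsilon>) * mh x"
proof -
  have "x \<noteq> a" using a_notin x by metis
  then show ?thesis using mass[of x] x unfolding Aset_def by simp
qed

lemma term_S:
  assumes x: "x \<in> S"
  shows "ereal (mh x) * \<phi> (mW x / mh x) \<le> ext_int \<nu> (\<lambda>y. if y \<in> Aset x then c2 y else 0)"
proof -
  have k: "measure \<nu> (Aset x) > 0" using mass_S[OF x] eps1 mh_pos[OF x] by simp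
  have Xm: "(\<lambda>y. (1 - \<epsilon>) * snd y) \<in> borel_measurable \<nu>" by measurable
  have Xi: "integrable \<nu> (\<lambda>y. (1 - \<epsilon>) * snd y * indicator (Aset x) y)"
    using Wi[of x] by (simp add: mult.assoc)
  have intX: "(\<integral> y. (1 - \<epsilon>) * snd y * indicator (Aset x) y \<partial>\<nu>) = (1 - \<epsilon>) * mW x"
    unfolding mW_def by (simp add: mult.assoc)
  have J: "ereal ((1 - \<epsilon>) * mh x) * \<phi> (mW x / mh x)
      \<le> ext_int \<nu> (\<lambda>y. if y \<in> Aset x then \<phi> ((1 - \<epsilon>) * snd y) else 0)"
  proof -
    have q: "(1 - \<epsilon>) * mW x / ((1 - \<epsilon>) * mh x) = mW x / mh x"
      using eps1 by simp
    show ?thesis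
      using jensen[OF ef nu.finite_measure_axioms Am k Xm Xi] unfolding intX mass_S[OF x] q .
  qed
  define c where "c = 1 / (1 - \<epsilon>)"
  have c: "0 < c" unfolding c_def using eps1 by simp
  have fm: "(\<lambda>y. if y \<in> Aset x then \<phi> ((1 - \<epsilon>) * snd y) else 0) \<in> borel_measurable \<nu>"
  proof -
    have "(\<lambda>y. \<phi> ((1 - \<epsilon>) * snd y)) \<in> borel_measurable \<nu>"
      using measurable_compose[OF Xm phi_meas] by simp
    then show ?thesis by (intro measurable_If_set) (use Am in auto)
  qed
  have "ereal (mh x) * \<phi> (mW x / mh x) = ereal ((1 - \<epsilon>) * mh x) * \<phi> (mW x / mh x) * ereal c"
  proof -
    have "ereal ((1 - \<epsilon>) * mh x) * ereal c = ereal (mh x)" unfolding c_def using eps1 by simp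
    then show ?thesis by (metis mult.assoc mult.commute)
  qed
  also have "\<dots> \<le> ext_int \<nu> (\<lambda>y. if y \<in> Aset x then \<phi> ((1 - \<epsilon>) * snd y) else 0) * ereal c"
    using J c by (intro ereal_mult_right_mono) auto
  also have "\<dots> = ext_int \<nu> (\<lambda>y. (if y \<in> Aset x then \<phi> ((1 - \<epsilon>) * snd y) else 0) * ereal c)"
    by (rule ext_int_cmult[OF c fm, symmetric])
  also have "\<dots> = ext_int \<nu> (\<lambda>y. if y \<in> Aset x then c2 y else 0)"
  proof (intro ext_int_cong_AE AE_I2)
    fix y
    show "(if y \<in> Aset x then \<phi> ((1 - \<epsilon>) * snd y) else 0) * ereal c = (if y \<in> Aset x then c2 y else 0)"
      using x eps1 unfolding c2_def Aset_def c_def by (auto simp: divide_ereal_def inverse_eq_divide)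
  qed
  finally show ?thesis .
qed

lemma ext_int_zero: "ext_int M (\<lambda>_. 0) = 0"
  unfolding ext_int_def by (simp add: zero_ennreal.rep_eq)

lemma term_a: "ereal (mW a) * cinf \<le> ext_int \<nu> (\<lambda>y. if y \<in> Aset a then c2 y else 0)"
proof -
  have c2a: "c2 y = cinf * ereal (snd y)" if "y \<in> Aset a" for y
    using that a_notin unfolding c2_def Aset_def by auto
  show ?thesis
  proof (cases cinf)
    case (real c0)
    have "ext_int \<nu> (\<lambda>y. if y \<in> Aset a then c2 y else 0) = ext_int \<nu> (\<lambda>y. ereal (c0 * (snd y * indicator (Aset a) y)))"
      by (intro ext_int_cong_AE AE_I2) (auto simp: c2a real indicator_def)
    also have "\<dots> = ereal (c0 * mW a)"
      using Wi[of a] unfolding mW_def by (subst ext_int_real) auto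
    finally show ?thesis using real by (simp add: mult.commute)
  next
    case PInf
    show ?thesis
    proof (cases "mW a = 0")
      case True
      have "0 \<le> ext_int \<nu> (\<lambda>y. if y \<in> Aset a then c2 y else 0)"
      proof -
        have "ext_int \<nu> (\<lambda>_. 0) \<le> ext_int \<nu> (\<lambda>y. if y \<in> Aset a then c2 y else 0)"
          using AEW by (intro ext_int_mono_AE) (auto elim!: eventually_mono simp: c2a PInf)
        then show ?thesis by (simp add: ext_int_zero)
      qed
      then show ?thesis using True PInf by simp
    next
      case False
      then have mpos: "mW a > 0" using mW_nonneg[of a] by simp
      define B where "B = {y \<in> Aset a. 0 < snd y}"
      have Bs: "B \<in> sets \<nu>" unfolding B_def using Am[of a] by measurable
      have "emeasure \<nu> B > 0"
      proof (rule ccontr)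
        assume "\<not> emeasure \<nu> B > 0"
        then have "emeasure \<nu> B = 0" by (simp add: not_gr_zero)
        then have "AE y in \<nu>. y \<notin> B" using Bs AE_not_in[of B \<nu>] by (simp add: null_sets_def)
        then have "AE y in \<nu>. snd y * indicator (Aset a) y = 0"
          using AEW by eventually_elim (auto simp: B_def indicator_def)
        then have "mW a = 0" unfolding mW_def by (simp add: integral_eq_zero_AE)
        then show False using mpos by simp
      qed
      then have "ext_int \<nu> (\<lambda>y. if y \<in> Aset a then c2 y else 0) = \<infinity>"
        using Bs by (intro ext_int_pinf[of B]) (auto simp: B_def c2a PInf)
      then show ?thesis by simp
    qed
  next
    case MInf then show ?thesis using phi_inf_nminf[OF ef] by simp
  qed
qed

end

context nu_setting
begin

interpretation nu: prob_space \<nu> by (rule nu_prob)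

definition "mu = distr (density \<nu> (\<lambda>y. ennreal (snd y))) borel fst"

lemma mu_sets: "sets mu = sets borel" and mu_space: "space mu = UNIV"
  unfolding mu_def by auto

lemma mu_em:
  assumes B: "B \<in> sets borel"
  shows "emeasure mu B = ennreal (\<integral> y. snd y * indicator (fst -` B) y \<partial>\<nu>)"
proof -
  have fB: "fst -` B \<in> sets \<nu>" using measurable_sets[OF fstm B] snu by simp
  have fm: "fst \<in> measurable (density \<nu> (\<lambda>y. ennreal (snd y))) borel"
    using fstm by (simp add: measurable_cong_sets[OF sets_density refl])
  have "emeasure mu B = emeasure (density \<nu> (\<lambda>y. ennreal (snd y))) (fst -` B \<inter> space (density \<nu> (\<lambda>y. ennreal (snd y))))"
    unfolding mu_def by (rule emeasure_distr[OF fm B])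
  also have "\<dots> = emeasure (density \<nu> (\<lambda>y. ennreal (snd y))) (fst -` B)" by (simp add: snu)
  also have "\<dots> = (\<integral>\<^sup>+ y. ennreal (snd y) * indicator (fst -` B) y \<partial>\<nu>)"
    by (rule emeasure_density) (use fB in auto)
  also have "\<dots> = (\<integral>\<^sup>+ y. ennreal (snd y * indicator (fst -` B) y) \<partial>\<nu>)"
    by (intro nn_integral_cong) (auto simp: indicator_def)
  also have "\<dots> = ennreal (\<integral> y. snd y * indicator (fst -` B) y \<partial>\<nu>)"
    using AEW by (intro nn_integral_eq_integral integrable_real_mult_indicator[OF fB Wint])
      (auto elim!: eventually_mono simp: indicator_def)
  finally show ?thesis .
qed

lemma mu_int_AE:
  assumes B: "B \<in> sets borel" and ae: "AE y in \<nu>. (fst y \<in> B) = (fst y \<in> C)" and C: "C \<in> sets borel"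
  shows "(\<integral> y. snd y * indicator (fst -` B) y \<partial>\<nu>) = (\<integral> y. snd y * indicator (fst -` C) y \<partial>\<nu>)"
proof -
  have fB: "fst -` B \<in> sets \<nu>" using measurable_sets[OF fstm B] snu by simp
  have fC: "fst -` C \<in> sets \<nu>" using measurable_sets[OF fstm C] snu by simp
  have m1: "(\<lambda>y. snd y * indicator (fst -` B) y) \<in> borel_measurable \<nu>"
    using integrable_real_mult_indicator[OF fB Wint] by (rule borel_measurable_integrable)
  have m2: "(\<lambda>y. snd y * indicator (fst -` C) y) \<in> borel_measurable \<nu>"
    using integrable_real_mult_indicator[OF fC Wint] by (rule borel_measurable_integrable)
  show ?thesis
    using ae by (intro integral_cong_AE[OF m1 m2]) (auto elim!: eventually_mono simp: indicator_def)
qed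

lemma mu_UNIV: "emeasure mu UNIV = 1"
  using mu_em[of UNIV] Wone by simp

lemma mu_prob: "prob_space mu"
  by (rule prob_spaceI) (simp add: mu_space mu_UNIV)

lemma mu_finite: "finite_measure mu"
  using mu_prob unfolding prob_space_def by blast

lemma mu_Z: "emeasure mu Z = 1"
proof -
  have Zs: "Z \<in> sets borel" using Zclosed by simp
  have "(\<integral> y. snd y * indicator (fst -` Z) y \<partial>\<nu>) = (\<integral> y. snd y * indicator (fst -` UNIV) y \<partial>\<nu>)"
    by (rule mu_int_AE[OF Zs]) (use AEZ in \<open>auto elim!: eventually_mono\<close>)
  then show ?thesis using mu_em[OF Zs] mu_UNIV mu_em[of UNIV] by simp
qed

lemma mu_single: "measure mu {x} = mW x"
proof -
  have "fst -` {x} = Aset x" unfolding Aset_def by auto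
  then show ?thesis using mu_em[of "{x}"] singleton_borel mW_nonneg[of x] unfolding measure_def mW_def
    by simp
qed

lemma mu_outside: "measure mu (UNIV - S) = mW a"
proof -
  have Ss: "UNIV - S \<in> sets borel" using finite_borel[OF finS] by auto
  have "(\<integral> y. snd y * indicator (fst -` (UNIV - S)) y \<partial>\<nu>) = (\<integral> y. snd y * indicator (fst -` {a}) y \<partial>\<nu>)"
    by (rule mu_int_AE[OF Ss _ singleton_borel]) (use AEF a_notin in \<open>auto elim!: eventually_mono\<close>)
  also have "fst -` {a} = Aset a" unfolding Aset_def by auto
  finally show ?thesis using mu_em[OF Ss] mW_nonneg[of a] unfolding measure_def mW_def by simp
qed

lemma mu_null: "emeasure mu (UNIV - insert a S) = 0"
proof -
  have Ss: "UNIV - insert a S \<in> sets borel" using finite_borel[of "insert a S"] by auto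
  have "(\<integral> y. snd y * indicator (fst -` (UNIV - insert a S)) y \<partial>\<nu>) = (\<integral> y. snd y * indicator (fst -` {}) y \<partial>\<nu>)"
    by (rule mu_int_AE[OF Ss]) (use AEF in \<open>auto elim!: eventually_mono\<close>)
  then show ?thesis using mu_em[OF Ss] by simp
qed

lemma D_mu: "phi_div \<phi> mu muh \<le> ereal r"
proof -
  have c2m: "c2 \<in> borel_measurable \<nu>" using c2_meas by (simp add: measurable_cong_sets[OF nu_sets refl])
  have dis: "disjoint_family_on Aset (insert a S)" unfolding disjoint_family_on_def Aset_def by auto
  have cov: "AE y in \<nu>. y \<in> (\<Union>x\<in>insert a S. Aset x)"
    using AEF by (rule eventually_mono) (auto simp: Aset_def)
  have C: "ext_int \<nu> c2 = (\<Sum>x\<in>insert a S. ext_int \<nu> (\<lambda>y. if y \<in> Aset x then c2 y else 0))"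
    by (rule ext_int_split[OF _ dis Am c2m cov neg_fin]) auto
  also have "\<dots> = ext_int \<nu> (\<lambda>y. if y \<in> Aset a then c2 y else 0) + (\<Sum>x\<in>S. ext_int \<nu> (\<lambda>y. if y \<in> Aset x then c2 y else 0))"
    using a_notin by (simp add: sum.insert)
  finally have C': "ext_int \<nu> c2 = \<dots>" .
  have "phi_div \<phi> mu muh = (\<Sum>x\<in>S. ereal (mh x) * \<phi> (measure mu {x} / mh x)) + ereal (measure mu (UNIV - S)) * cinf"
    by (rule D_formula[OF mu_prob mu_sets])
  also have "\<dots> = (\<Sum>x\<in>S. ereal (mh x) * \<phi> (mW x / mh x)) + ereal (mW a) * cinf"
    unfolding mu_single mu_outside ..
  also have "\<dots> \<le> (\<Sum>x\<in>S. ext_int \<nu> (\<lambda>y. if y \<in> Aset x then c2 y else 0)) + ext_int \<nu> (\<lambda>y. if y \<in> Aset a then c2 y else 0)"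
    by (intro add_mono sum_mono term_S term_a)
  also have "\<dots> = ext_int \<nu> c2" unfolding C' by (simp add: add.commute)
  also have "\<dots> \<le> ereal r" by (rule Cle)
  finally show ?thesis .
qed

lemma value_eq: "ext_int \<nu> (\<lambda>(v, w). ereal (ell v * w)) = ext_int mu (\<lambda>z. ereal (ell z))"
proof -
  have "ext_int \<nu> (\<lambda>(v, w). ereal (ell v * w)) = ext_int \<nu> (\<lambda>y. ereal (\<Sum>x\<in>insert a S. ell x * (snd y * indicator (Aset x) y)))"
  proof (rule ext_int_cong_AE)
    show "AE y in \<nu>. (case y of (v, w) \<Rightarrow> ereal (ell v * w)) = ereal (\<Sum>x\<in>insert a S. ell x * (snd y * indicator (Aset x) y))"
      using AEF
    proof (rule eventually_mono)
      fix y :: "'a \<times> real" assume y: "fst y \<in> insert a S"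
      have "(\<Sum>x\<in>insert a S. ell x * (snd y * indicator (Aset x) y)) = (\<Sum>x\<in>{fst y}. ell x * (snd y * indicator (Aset x) y))"
        using y by (intro sum.mono_neutral_right) (auto simp: Aset_def)
      then show "(case y of (v, w) \<Rightarrow> ereal (ell v * w)) = ereal (\<Sum>x\<in>insert a S. ell x * (snd y * indicator (Aset x) y))"
        by (cases y) (simp add: Aset_def)
    qed
  qed
  also have "\<dots> = ereal (\<integral> y. (\<Sum>x\<in>insert a S. ell x * (snd y * indicator (Aset x) y)) \<partial>\<nu>)"
    by (rule ext_int_real) (use Wi in auto)
  also have "(\<integral> y. (\<Sum>x\<in>insert a S. ell x * (snd y * indicator (Aset x) y)) \<partial>\<nu>)
      = (\<Sum>x\<in>insert a S. \<integral> y. ell x * (snd y * indicator (Aset x) y) \<partial>\<nu>)"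
    by (rule Bochner_Integration.integral_sum) (use Wi in auto)
  also have "\<dots> = (\<Sum>x\<in>insert a S. ell x * mW x)"
    unfolding mW_def by simp
  also have "\<dots> = ext_int mu (\<lambda>z. ereal (ell z))"
  proof -
    have "ext_int mu (\<lambda>z. ereal (ell z)) = (\<Sum>x\<in>insert a S. ereal (measure mu {x}) * ereal (ell x))"
      by (rule ext_int_finite_support[OF mu_finite]) (use mu_null singleton_borel in \<open>auto simp: mu_space mu_sets\<close>)
    then show ?thesis by (simp add: mu_single sum_ereal mult.commute)
  qed
  finally show ?thesis .
qed

lemma dir_le_nu:
  "\<exists>\<mu>. (prob_space \<mu> \<and> sets \<mu> = sets borel \<and> emeasure \<mu> Z = 1 \<and> phi_div \<phi> \<mu> muh \<le> ereal r) \<and>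
       ext_int \<nu> (\<lambda>(v, w). ereal (ell v * w)) \<le> ext_int \<mu> (\<lambda>z. ereal (ell z))"
  using mu_prob mu_sets mu_Z D_mu value_eq by (intro exI[of _ mu]) auto

end

context setting
begin

lemma main_eq:
  "(SUP \<nu> \<in> {\<nu> :: ('a \<times> real) measure.
                 prob_space \<nu> \<and> sets \<nu> = sets borel \<and> emeasure \<nu> (Z \<times> {0..}) = 1 \<and>
                 OT_disc (cost_ot \<phi> n zh \<epsilon>) \<nu> (nu_hat n zh \<epsilon>) \<le> ereal r}.
        ext_int \<nu> (\<lambda>(v, w). ereal (ell v * w)))
     =
     (SUP \<mu> \<in> {\<mu> :: 'a measure.
                 prob_space \<mu> \<and> sets \<mu> = sets borel \<and> emeasure \<mu> Z = 1 \<and>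
                 phi_div \<phi> \<mu> (empirical n zh) \<le> ereal r}.
        ext_int \<mu> (\<lambda>z. ereal (ell z)))"
proof (rule antisym)
  show "(SUP \<nu> \<in> {\<nu> :: ('a \<times> real) measure.
                 prob_space \<nu> \<and> sets \<nu> = sets borel \<and> emeasure \<nu> (Z \<times> {0..}) = 1 \<and>
                 OT_disc (cost_ot \<phi> n zh \<epsilon>) \<nu> (nu_hat n zh \<epsilon>) \<le> ereal r}.
        ext_int \<nu> (\<lambda>(v, w). ereal (ell v * w)))
     \<le> (SUP \<mu> \<in> {\<mu> :: 'a measure.
                 prob_space \<mu> \<and> sets \<mu> = sets borel \<and> emeasure \<mu> Z = 1 \<and>
                 phi_div \<phi> \<mu> (empirical n zh) \<le> ereal r}.
        ext_int \<mu> (\<lambda>z. ereal (ell z)))"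
  proof (rule SUP_mono)
    fix \<nu> assume "\<nu> \<in> {\<nu> :: ('a \<times> real) measure.
                 prob_space \<nu> \<and> sets \<nu> = sets borel \<and> emeasure \<nu> (Z \<times> {0..}) = 1 \<and>
                 OT_disc (cost_ot \<phi> n zh \<epsilon>) \<nu> (nu_hat n zh \<epsilon>) \<le> ereal r}"
    then have "nu_setting Z ell \<phi> r \<epsilon> n zh \<nu>"
      by (intro nu_setting.intro nu_setting_axioms.intro setting_axioms) auto
    then show "\<exists>\<mu>\<in>{\<mu> :: 'a measure.
                 prob_space \<mu> \<and> sets \<mu> = sets borel \<and> emeasure \<mu> Z = 1 \<and>
                 phi_div \<phi> \<mu> (empirical n zh) \<le> ereal r}.
          ext_int \<nu> (\<lambda>(v, w). ereal (ell v * w)) \<le> ext_int \<mu> (\<lambda>z. ereal (ell z))"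
      using nu_setting.dir_le_nu by blast
  qed
  show "(SUP \<mu> \<in> {\<mu> :: 'a measure.
                 prob_space \<mu> \<and> sets \<mu> = sets borel \<and> emeasure \<mu> Z = 1 \<and>
                 phi_div \<phi> \<mu> (empirical n zh) \<le> ereal r}.
        ext_int \<mu> (\<lambda>z. ereal (ell z)))
     \<le> (SUP \<nu> \<in> {\<nu> :: ('a \<times> real) measure.
                 prob_space \<nu> \<and> sets \<nu> = sets borel \<and> emeasure \<nu> (Z \<times> {0..}) = 1 \<and>
                 OT_disc (cost_ot \<phi> n zh \<epsilon>) \<nu> (nu_hat n zh \<epsilon>) \<le> ereal r}.
        ext_int \<nu> (\<lambda>(v, w). ereal (ell v * w)))"
  proof (rule SUP_mono)
    fix \<mu> assume "\<mu> \<in> {\<mu> :: 'a measure.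
                 prob_space \<mu> \<and> sets \<mu> = sets borel \<and> emeasure \<mu> Z = 1 \<and>
                 phi_div \<phi> \<mu> (empirical n zh) \<le> ereal r}"
    then show "\<exists>\<nu>\<in>{\<nu> :: ('a \<times> real) measure.
                 prob_space \<nu> \<and> sets \<nu> = sets borel \<and> emeasure \<nu> (Z \<times> {0..}) = 1 \<and>
                 OT_disc (cost_ot \<phi> n zh \<epsilon>) \<nu> (nu_hat n zh \<epsilon>) \<le> ereal r}.
          ext_int \<mu> (\<lambda>z. ereal (ell z)) \<le> ext_int \<nu> (\<lambda>(v, w). ereal (ell v * w))"
      using dir_ge[of \<mu>] by auto
  qed
qed

end

theorem mainTheorem3:
  fixes Z :: "'a::euclidean_space set"
    and ell :: "'a \<Rightarrow> real"
    and \<phi> :: "real \<Rightarrow> ereal"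
    and r \<epsilon> :: real
    and n :: nat
    and zh :: "nat \<Rightarrow> 'a"
  assumes "compact Z" and "convex Z"
    and "usc_on Z ell"
    and "entropy_function \<phi>"
    and "r \<ge> 0"
    and "0 < \<epsilon>" and "\<epsilon> < 1"
    and "n \<ge> 1"
    and "\<forall>i\<in>{1..n}. zh i \<in> Z"
    and "zh (Suc n) \<in> Z" and "\<forall>z\<in>Z. ell z \<le> ell (zh (Suc n))"
    and "zh (Suc n) \<notin> zh ` {1..n}"
  shows
    "(SUP \<nu> \<in> {\<nu> :: ('a \<times> real) measure.
                 prob_space \<nu> \<and> sets \<nu> = sets borel \<and> emeasure \<nu> (Z \<times> {0..}) = 1 \<and>
                 OT_disc (cost_ot \<phi> n zh \<epsilon>) \<nu> (nu_hat n zh \<epsilon>) \<le> ereal r}.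
        ext_int \<nu> (\<lambda>(v, w). ereal (ell v * w)))
     =
     (SUP \<mu> \<in> {\<mu> :: 'a measure.
                 prob_space \<mu> \<and> sets \<mu> = sets borel \<and> emeasure \<mu> Z = 1 \<and>
                 phi_div \<phi> \<mu> (empirical n zh) \<le> ereal r}.
        ext_int \<mu> (\<lambda>z. ereal (ell z)))"
proof -
  interpret setting Z ell \<phi> r \<epsilon> n zh
    using assms by (unfold_locales) auto
  show ?thesis by (rule main_eq)
qed

end
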